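(* Consider a pure departure process with $m\ge1$ servers, each with service rate $\mu>0$, started with $x\ge1$ customers, observed over a time interval $[0,h]$, $h>0$. Select a server that is serving a customer at time $0$, and let $\mathcal E$ be the event that this server is still serving that same customer at time $h$. Let $D$ be the total number of customers completing service during $[0,h]$. (1) If $x\le m$, then $P(\mathcal E\mid D=d)=\frac{x-d}{x}$ for $d=0,1,\dots,x$. (2) If $x\ge m+1$, then $P(\mathcal E\mid D=d)=\left(\frac{m-1}{m}\right)^d$ for $d=0,1,\dots,x-m$, and $P(\mathcal E\mid D=d)=\left(\frac{m-1}{m}\right)^{x-m}\frac{x-d}{m}$ for $d=x-m,\dots,x$.
   Context: A pure departure process with $m\ge1$ servers and service rate $\mu>0$ started from $x$ customers is a first-come-first-served queue with $m$ identical servers and unlimited waiting room, no arrivals, and initially $x$ customers, of which $\min(x,m)$ are in service and the others wait; service times are i.i.d. exponential with rate $\mu$ and independent of everything else, and a freed server immediately takes the next waiting customer (if any). *)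

theory Defs
  imports "HOL-Probability.Probability"
begin

text \<open>Pure departure process (FCFS, m servers, no arrivals), driven by the service
  requirements S i of customers i = 0, 1, ... (customer i is the i-th in line).
  Customers 0..m-1 start service at time 0.  Customer i >= m starts service at the
  (i-m+1)-th smallest departure time among customers 0..i-1 (when a server becomes
  free), and departs S i time units later.\<close>

function departure :: "nat \<Rightarrow> (nat \<Rightarrow> real) \<Rightarrow> nat \<Rightarrow> real" where
  "departure m S i =
     (if i < m then S i
      else sort (map (departure m S) [0..<i]) ! (i - m) + S i)"
  by pat_completeness auto
termination
  by (relation "Wellfounded.measure (\<lambda>(m, S, i). i)") auto

definition num_departures :: "nat \<Rightarrow> nat \<Rightarrow> real \<Rightarrow> (nat \<Rightarrow> real) \<Rightarrow> nat" where
  "num_departures m x h S = card {i. i < x \<and> departure m S i \<le> h}"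

end

theory Submission
  imports Defs
begin


declare departure.simps[simp del]

lemma dep_local:
  "(\<And>i'. i' \<le> i \<Longrightarrow> S i' = S' i') \<Longrightarrow> departure m S i = departure m S' i"
proof (induction i rule: less_induct)
  case (less i)
  have "map (departure m S) [0..<i] = map (departure m S') [0..<i]"
    using less by (intro map_cong) auto
  moreover have "S i = S' i" using less.prems by auto
  ultimately show ?case
    by (subst (1 2) departure.simps) (simp only: if_cancel)
qed

lemma dep_nonneg:
  assumes "m \<ge> 1" "\<And>i'. i' \<le> i \<Longrightarrow> S i' \<ge> 0"
  shows "departure m S i \<ge> 0"
  using assms(2)
proof (induction i rule: less_induct)
  case (less i)
  show ?case
  proof (cases "i < m")
    case True then show ?thesis using less.prems by (subst departure.simps) auto
  next
    case False
    let ?xs = "sort (map (departure m S) [0..<i])"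
    have len: "i - m < length ?xs" using False assms(1) by simp
    have "?xs ! (i - m) \<in> set ?xs" using len by (rule nth_mem)
    then obtain i' where "i' < i" "?xs ! (i - m) = departure m S i'" by auto
    with less have "?xs ! (i - m) \<ge> 0" by auto
    then show ?thesis using False less.prems by (subst departure.simps) auto
  qed
qed

definition skip :: "nat \<Rightarrow> nat \<Rightarrow> nat" where "skip a i = (if i < a then i else Suc i)"

lemma sort_shift:
  fixes t :: real
  assumes that: "\<forall>y\<in>set ys. y \<ge> 0"
  shows "sort (t # map (\<lambda>v. v + t) ys) = t # map (\<lambda>v. v + t) (sort ys)"
proof (rule properties_for_sort)
  show "mset (t # map (\<lambda>v. v + t) (sort ys)) = mset (t # map (\<lambda>v. v + t) ys)"
    by (simp add: mset_map)
  have "sorted (map (\<lambda>v. v + t) (sort ys))"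
    by (simp add: sorted_map)
  then show "sorted (t # map (\<lambda>v. v + t) (sort ys))"
    using that by (auto simp: sorted_map)
qed

lemma map_skip_upt:
  assumes "a \<le> i"
  shows "map (skip a) [0..<i] = [0..<a] @ [Suc a..<Suc i]"
proof -
  have "[0..<i] = [0..<a] @ [a..<i]" using assms by (metis le0 upt_add_eq_append add_0 le_add_diff_inverse)
  moreover have "map (skip a) [0..<a] = [0..<a]" by (auto simp: skip_def intro!: map_idI)
  moreover have "map (skip a) [a..<i] = map Suc [a..<i]" by (auto simp: skip_def intro!: map_cong)
  ultimately show ?thesis by (simp add: map_Suc_upt)
qed

lemma dep_ge:
  assumes m: "m \<ge> 1" and nn: "\<And>i. i < n \<Longrightarrow> S i \<ge> 0"
    and amin: "\<And>i. i < min n m \<Longrightarrow> t \<le> S i"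
  shows "i < n \<Longrightarrow> t \<le> departure m S i"
proof (induction i rule: less_induct)
  case (less i)
  show ?case
  proof (cases "i < m")
    case True then show ?thesis using less.prems amin by (subst departure.simps) auto
  next
    case False
    let ?xs = "sort (map (departure m S) [0..<i])"
    have len: "i - m < length ?xs" using False m by simp
    have "?xs ! (i - m) \<in> set ?xs" using len by (rule nth_mem)
    then obtain i' where "i' < i" "?xs ! (i - m) = departure m S i'" by auto
    with less have "?xs ! (i - m) \<ge> t" by auto
    moreover have "S i \<ge> 0" using nn less.prems by auto
    ultimately show ?thesis using False by (subst departure.simps) auto
  qed
qed

lemma dep_shift:
  assumes m: "m \<ge> 1" and k: "k = min n m" and a: "a < k"
    and nn: "\<And>i. i < n \<Longrightarrow> S i \<ge> 0"
    and amin: "\<And>i. i < k \<Longrightarrow> S a \<le> S i"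
    and S': "\<And>i. i < n - 1 \<Longrightarrow> S' i = S (skip a i) - (if i < k - 1 then S a else 0)"
  shows "i < n - 1 \<Longrightarrow> departure m S' i = departure m S (skip a i) - S a"
proof (induction i rule: less_induct)
  case (less i)
  define t where "t = S a"
  have ge: "\<And>i. i < n \<Longrightarrow> t \<le> departure m S i"
    using dep_ge[OF m nn, where t=t] amin k unfolding t_def by auto
  show ?case
  proof (cases "i < k - 1")
    case True
    then have "i < m" "skip a i < m" using k a by (auto simp: skip_def)
    then show ?thesis using S' less.prems True
      by (subst (1 2) departure.simps) (simp add: t_def)
  next
    case False
    then have km: "k = m" using k less.prems by auto
    have sk: "skip a i = Suc i" using False a by (auto simp: skip_def)
    have S'i: "S' i = S (Suc i)" using S' less.prems False sk by simp
    have ai: "a \<le> i" using False a by simp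
    have ms: "mset (map (departure m S) [0..<Suc i]) =
          mset (t # map (\<lambda>v. v + t) (map (departure m S') [0..<i]))"
    proof -
      have "map (\<lambda>v. v + t) (map (departure m S') [0..<i]) = map (departure m S) (map (skip a) [0..<i])"
        using less.IH less.prems by (auto simp: t_def)
      also have "\<dots> = map (departure m S) [0..<a] @ map (departure m S) [Suc a..<Suc i]"
        using map_skip_upt[OF ai] by simp
      finally have eq: "map (\<lambda>v. v + t) (map (departure m S') [0..<i]) = \<dots>" .
      have "[0..<Suc i] = [0..<a] @ [a..<Suc i]" using upt_add_eq_append[of 0 a "Suc i - a"] ai by simp
      also have "[a..<Suc i] = a # [Suc a..<Suc i]" using ai by (simp add: upt_conv_Cons)
      finally have "[0..<Suc i] = [0..<a] @ a # [Suc a..<Suc i]" .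
      moreover have da: "departure m S a = t" using a k by (subst departure.simps) (simp add: t_def)
      ultimately have "map (departure m S) [0..<Suc i] = map (departure m S) [0..<a] @ t # map (departure m S) [Suc a..<Suc i]"
        by simp
      then show ?thesis unfolding eq by simp
    qed
    have nn': "\<forall>y\<in>set (map (departure m S') [0..<i]). y \<ge> 0"
    proof
      fix y assume "y \<in> set (map (departure m S') [0..<i])"
      then obtain i' where i': "i' < i" "y = departure m S' i'" by auto
      then have "y = departure m S (skip a i') - t" using less.IH less.prems by (auto simp: t_def)
      moreover have "skip a i' < n" using i' less.prems by (auto simp: skip_def)
      ultimately show "y \<ge> 0" using ge by auto
    qed
    have srt: "sort (map (departure m S) [0..<Suc i]) = t # map (\<lambda>v. v + t) (sort (map (departure m S') [0..<i]))"
      using sort_shift[OF nn', of t] ms by (metis mset_sort properties_for_sort sorted_sort)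
    have "departure m S (Suc i) = sort (map (departure m S) [0..<Suc i]) ! (Suc i - m) + S (Suc i)"
    proof -
      have "\<not> Suc i < m" using False km by auto
      then show ?thesis by (subst departure.simps) (simp only: if_False)
    qed
    show ?thesis
    proof (cases "i < m")
      case True
      then have "Suc i - m = 0" by simp
      then have "departure m S (Suc i) = t + S (Suc i)"
        using \<open>departure m S (Suc i) = _\<close> srt by simp
      moreover have "departure m S' i = S (Suc i)" using True S'i by (subst departure.simps) simp
      ultimately show ?thesis using sk t_def by simp
    next
      case False
      then have "Suc i - m = Suc (i - m)" by simp
      moreover have "i - m < i" using False m by simp
      ultimately have "departure m S (Suc i) = sort (map (departure m S') [0..<i]) ! (i - m) + t + S (Suc i)"
        using \<open>departure m S (Suc i) = _\<close> srt by simp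
      moreover have "departure m S' i = sort (map (departure m S') [0..<i]) ! (i - m) + S (Suc i)"
        using False S'i by (subst departure.simps) simp
      ultimately show ?thesis using sk t_def by simp
    qed
  qed
qed

lemma skip_inj: "inj (skip a)" by (auto simp: inj_on_def skip_def split: if_splits)
lemma skip_ne: "skip a i \<noteq> a" by (auto simp: skip_def)

lemma nd_shift:
  assumes m: "m \<ge> 1" and k: "k = min n m" and a: "a < k"
    and nn: "\<And>i. i < n \<Longrightarrow> S i \<ge> 0"
    and amin: "\<And>i. i < k \<Longrightarrow> S a \<le> S i"
    and S': "\<And>i. i < n - 1 \<Longrightarrow> S' i = S (skip a i) - (if i < k - 1 then S a else 0)"
  shows "num_departures m n h S = (if S a \<le> h then Suc (num_departures m (n - 1) (h - S a) S') else 0)"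
proof -
  have ge: "\<And>i. i < n \<Longrightarrow> S a \<le> departure m S i"
    using dep_ge[OF m nn, where t="S a"] amin k by auto
  have sh: "\<And>i. i < n - 1 \<Longrightarrow> departure m S' i = departure m S (skip a i) - S a"
    using dep_shift[OF m k a nn amin S'] by auto
  show ?thesis
  proof (cases "S a \<le> h")
    case False
    then have "{i. i < n \<and> departure m S i \<le> h} = {}" using ge by force
    then show ?thesis using False by (simp add: num_departures_def)
  next
    case True
    have da: "departure m S a = S a" using a k by (subst departure.simps) simp
    have "{i. i < n \<and> departure m S i \<le> h} = insert a (skip a ` {i. i < n - 1 \<and> departure m S' i \<le> h - S a})"
    proof (intro set_eqI iffI)
      fix i assume i: "i \<in> {i. i < n \<and> departure m S i \<le> h}"
      show "i \<in> insert a (skip a ` {i. i < n - 1 \<and> departure m S' i \<le> h - S a})"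
      proof (cases "i = a")
        case False
        define i' where "i' = (if i < a then i else i - 1)"
        have "skip a i' = i" using False by (auto simp: skip_def i'_def)
        moreover have "i' < n - 1" using i False a k by (auto simp: i'_def)
        ultimately show ?thesis using i sh[of i'] by auto
      qed simp
    next
      fix i assume "i \<in> insert a (skip a ` {i. i < n - 1 \<and> departure m S' i \<le> h - S a})"
      then show "i \<in> {i. i < n \<and> departure m S i \<le> h}"
      proof
        assume "i = a" then show ?thesis using True da a k by auto
      next
        assume "i \<in> skip a ` {i. i < n - 1 \<and> departure m S' i \<le> h - S a}"
        then obtain i' where "i' < n - 1" "departure m S' i' \<le> h - S a" "i = skip a i'" by auto
        then show ?thesis using sh[of i'] by (auto simp: skip_def)
      qed
    qed
    moreover have "a \<notin> skip a ` {i. i < n - 1 \<and> departure m S' i \<le> h - S a}" using skip_ne by (metis (no_types, lifting) imageE)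
    moreover have "card (skip a ` {i. i < n - 1 \<and> departure m S' i \<le> h - S a}) = card {i. i < n - 1 \<and> departure m S' i \<le> h - S a}"
      by (rule card_image, rule inj_on_subset[OF skip_inj]) simp
    ultimately show ?thesis using True by (simp add: num_departures_def)
  qed
qed

lemma nd_le: "num_departures m n h S \<le> n"
  unfolding num_departures_def by (rule order.trans[OF card_mono[of "{..<n}"]]) auto

lemma nd_local: "(\<And>i. i < n \<Longrightarrow> S i = S' i) \<Longrightarrow> num_departures m n h S = num_departures m n h S'"
  unfolding num_departures_def
  by (intro arg_cong[where f=card] Collect_cong conj_cong refl) (auto intro!: dep_local[where S=S and S'=S'] arg_cong2[where f="(\<le>)"])


lemma sort_nth_le:
  fixes xs :: "real list"
  assumes k: "k < length xs"
  shows "(sort xs ! k \<le> c) \<longleftrightarrow> Suc k \<le> length (filter (\<lambda>v. v \<le> c) xs)"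
proof -
  let ?ys = "sort xs"
  have s: "sorted ?ys" by simp
  have len: "length (filter (\<lambda>v. v \<le> c) xs) = length (filter (\<lambda>v. v \<le> c) ?ys)"
    by (metis mset_filter mset_sort size_mset)
  also have "\<dots> = card {i. i < length ?ys \<and> ?ys ! i \<le> c}" by (rule length_filter_conv_card)
  finally have L: "length (filter (\<lambda>v. v \<le> c) xs) = card {i. i < length xs \<and> ?ys ! i \<le> c}" by simp
  show ?thesis
  proof
    assume le: "?ys ! k \<le> c"
    have "{..k} \<subseteq> {i. i < length xs \<and> ?ys ! i \<le> c}"
    proof
      fix i assume "i \<in> {..k}"
      then have "i \<le> k" by simp
      then have "?ys ! i \<le> ?ys ! k" using s k by (simp add: sorted_nth_mono)
      then show "i \<in> {i. i < length xs \<and> ?ys ! i \<le> c}" using le k \<open>i \<le> k\<close> by auto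
    qed
    then have "card {..k} \<le> card {i. i < length xs \<and> ?ys ! i \<le> c}" by (intro card_mono) auto
    then show "Suc k \<le> length (filter (\<lambda>v. v \<le> c) xs)" using L by simp
  next
    assume ge: "Suc k \<le> length (filter (\<lambda>v. v \<le> c) xs)"
    show "?ys ! k \<le> c"
    proof (rule ccontr)
      assume "\<not> ?ys ! k \<le> c"
      then have "{i. i < length xs \<and> ?ys ! i \<le> c} \<subseteq> {..<k}"
      proof (intro subsetI)
        fix i assume nk: "\<not> ?ys ! k \<le> c" and i: "i \<in> {i. i < length xs \<and> ?ys ! i \<le> c}"
        show "i \<in> {..<k}"
        proof (rule ccontr)
          assume "i \<notin> {..<k}"
          then have "k \<le> i" by simp
          then have "?ys ! k \<le> ?ys ! i" using s i by (intro sorted_nth_mono) auto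
          then show False using nk i by simp
        qed
      qed
      then have "card {i. i < length xs \<and> ?ys ! i \<le> c} \<le> k" by (metis card_lessThan card_mono finite_lessThan)
      then show False using L ge by simp
    qed
  qed
qed

lemma meas_sort_nth:
  fixes g :: "nat \<Rightarrow> 'a \<Rightarrow> real"
  assumes g: "\<And>i. i < L \<Longrightarrow> g i \<in> borel_measurable M" and k: "k < L"
  shows "(\<lambda>x. sort (map (\<lambda>i. g i x) [0..<L]) ! k) \<in> borel_measurable M"
proof (subst borel_measurable_iff_le, intro allI)
  fix c
  have eq: "{w \<in> space M. sort (map (\<lambda>i. g i w) [0..<L]) ! k \<le> c} =
        {w \<in> space M. Suc k \<le> card {i. i < L \<and> g i w \<le> c}}"
  proof -
    have "\<And>x. {i. i < length (map (\<lambda>i. g i x) [0..<L]) \<and> map (\<lambda>i. g i x) [0..<L] ! i \<le> c} = {i. i<L \<and> g i x \<le> c}" by auto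
    moreover have "\<And>x. (sort (map (\<lambda>i. g i x) [0..<L]) ! k \<le> c) \<longleftrightarrow> Suc k \<le> length (filter (\<lambda>v. v \<le> c) (map (\<lambda>i. g i x) [0..<L]))"
      using k by (intro sort_nth_le) simp
    ultimately show ?thesis by (simp only: length_filter_conv_card)
  qed
  have sets: "\<And>i. {x \<in> space M. i \<in> {i. i < L \<and> g i x \<le> c}} \<in> sets M"
  proof -
    fix i show "{x \<in> space M. i \<in> {i. i < L \<and> g i x \<le> c}} \<in> sets M"
    proof (cases "i < L")
      case True
      have "\<forall>a. {x \<in> space M. g i x \<le> a} \<in> sets M" by (rule iffD1[OF borel_measurable_iff_le g[OF True]])
      then have "{x \<in> space M. g i x \<le> c} \<in> sets M" by (rule spec)
      then show ?thesis using True by simp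
    qed simp
  qed
  have cm: "(\<lambda>x. card {i. i < L \<and> g i x \<le> c}) \<in> measurable M (count_space UNIV)"
    by (rule measurable_card) (rule sets)
  have "(\<lambda>x. card {i. i < L \<and> g i x \<le> c}) -` {Suc k..} \<inter> space M \<in> sets M"
    by (rule measurable_sets[OF cm]) simp
  moreover have "(\<lambda>x. card {i. i < L \<and> g i x \<le> c}) -` {Suc k..} \<inter> space M = {w \<in> space M. Suc k \<le> card {i. i < L \<and> g i w \<le> c}}"
    by auto
  ultimately have "{w \<in> space M. Suc k \<le> card {i. i < L \<and> g i w \<le> c}} \<in> sets M"
    by (simp only:)
  then show "{w \<in> space M. sort (map (\<lambda>i. g i w) [0..<L]) ! k \<le> c} \<in> sets M"
    by (simp only: eq)
qed

lemma meas_dep: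
  assumes m: "m \<ge> 1" and f: "\<And>i'. i' \<le> i \<Longrightarrow> (\<lambda>x. f x i') \<in> borel_measurable M"
  shows "(\<lambda>x. departure m (f x) i) \<in> borel_measurable M"
  using f
proof (induction i rule: less_induct)
  case (less i)
  show ?case
  proof (cases "i < m")
    case True
    then show ?thesis using less.prems by (subst departure.simps) simp
  next
    case False
    have "(\<lambda>x. sort (map (\<lambda>i'. departure m (f x) i') [0..<i]) ! (i - m)) \<in> borel_measurable M"
      using less False m by (intro meas_sort_nth) auto
    moreover have "(\<lambda>x. f x i) \<in> borel_measurable M" using less.prems by simp
    ultimately have "(\<lambda>x. sort (map (\<lambda>i'. departure m (f x) i') [0..<i]) ! (i - m) + f x i) \<in> borel_measurable M"
      by measurable
    then show ?thesis using False
      by (subst departure.simps) (simp del: departure.simps)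
  qed
qed


definition Exp :: "real \<Rightarrow> real measure" where
  "Exp \<mu> = density lborel (\<lambda>x. ennreal (exponential_density \<mu> x))"

lemma sets_Exp[measurable_cong, simp]: "sets (Exp \<mu>) = sets borel"
  by (simp add: Exp_def)
lemma space_Exp[simp]: "space (Exp \<mu>) = UNIV"
  by (simp add: Exp_def)

lemma prob_space_Exp: "\<mu> > 0 \<Longrightarrow> prob_space (Exp \<mu>)"
  unfolding Exp_def by (rule prob_space_exponential_density)

lemma AE_Exp_nonneg: "AE y in Exp \<mu>. 0 \<le> y"
  unfolding Exp_def
  by (subst AE_density) (auto simp: exponential_density_def split: if_splits)

lemma AE_Exp_ne: "AE y in Exp \<mu>. y \<noteq> c"
  unfolding Exp_def
  by (subst AE_density) (auto intro: AE_mp[OF AE_lborel_singleton[of c]])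

lemma Exp_shift1:
  assumes \<mu>: "\<mu> > 0" and t: "t \<ge> 0" and f[measurable]: "f \<in> borel_measurable borel"
  shows "(\<integral>\<^sup>+ y. indicator {t..} y * f (y - t) \<partial>Exp \<mu>) = ennreal (exp (- (\<mu> * t))) * (\<integral>\<^sup>+ y. f y \<partial>Exp \<mu>)"
proof -
  let ?e = "\<lambda>x. ennreal (exponential_density \<mu> x)"
  have "(\<integral>\<^sup>+ y. indicator {t..} y * f (y - t) \<partial>Exp \<mu>) = (\<integral>\<^sup>+ y. ?e y * (indicator {t..} y * f (y - t)) \<partial>lborel)"
    unfolding Exp_def by (subst nn_integral_density) auto
  also have "\<dots> = (\<integral>\<^sup>+ y. ennreal (exp (- (\<mu> * t))) * (?e (y - t) * f (y - t)) \<partial>lborel)"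
  proof (intro nn_integral_cong)
    fix y :: real
    show "?e y * (indicator {t..} y * f (y - t)) = ennreal (exp (- (\<mu> * t))) * (?e (y - t) * f (y - t))"
    proof (cases "t \<le> y")
      case True
      then have "exponential_density \<mu> y = exp (- (\<mu> * t)) * exponential_density \<mu> (y - t)"
        using t by (simp add: exponential_density_def algebra_simps flip: exp_add)
      then have "ennreal (exponential_density \<mu> y) = ennreal (exp (- (\<mu> * t))) * ennreal (exponential_density \<mu> (y - t))"
        using exponential_density_nonneg[OF \<mu>] by (simp only:) (rule ennreal_mult, auto)
      then show ?thesis using True by (simp only: mult.assoc indicator_simps mult_1 atLeast_iff if_True)
    next
      case False
      then show ?thesis by (simp add: exponential_density_def)
    qed
  qed
  also have "\<dots> = ennreal (exp (- (\<mu> * t))) * (\<integral>\<^sup>+ y. ?e (y - t) * f (y - t) \<partial>lborel)"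
    by (rule nn_integral_cmult) measurable
  also have "(\<integral>\<^sup>+ y. ?e (y - t) * f (y - t) \<partial>lborel) = (\<integral>\<^sup>+ y. ?e y * f y \<partial>lborel)"
  proof -
    have "(\<integral>\<^sup>+ y. ?e y * f y \<partial>lborel) = (\<integral>\<^sup>+ y. ?e y * f y \<partial>distr lborel borel ((+) (- t)))"
      by (simp add: lborel_distr_plus)
    also have "\<dots> = (\<integral>\<^sup>+ y. ?e (- t + y) * f (- t + y) \<partial>lborel)"
      by (subst nn_integral_distr) auto
    finally show ?thesis by simp
  qed
  also have "(\<integral>\<^sup>+ y. ?e y * f y \<partial>lborel) = (\<integral>\<^sup>+ y. f y \<partial>Exp \<mu>)"
    unfolding Exp_def by (subst nn_integral_density) auto
  finally show ?thesis .
qed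


lemma psf_Exp: "\<mu> > 0 \<Longrightarrow> product_sigma_finite (\<lambda>_::nat. Exp \<mu>)"
  unfolding product_sigma_finite_def
  by (simp add: prob_space_Exp prob_space_imp_sigma_finite)

lemma meas_shiftmap[measurable]:
  "(\<lambda>z. \<lambda>i\<in>N. z i - d i) \<in> measurable (PiM N (\<lambda>_. Exp \<mu>)) (PiM N (\<lambda>_. Exp \<mu>))"
proof (rule measurable_restrict)
  fix i assume "i \<in> N"
  then have "(\<lambda>z. z i - d i) \<in> borel_measurable (PiM N (\<lambda>_. Exp \<mu>))"
    by measurable
  then show "(\<lambda>z. z i - d i) \<in> measurable (PiM N (\<lambda>_. Exp \<mu>)) (Exp \<mu>)"
    by (simp only: measurable_cong_sets[OF refl sets_Exp[of \<mu>]])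
qed

lemma meas_upd:
  fixes N' :: "nat set"
  assumes "c \<notin> N'"
  shows "(\<lambda>(x, y). x(c := y)) \<in> measurable (PiM N' (\<lambda>_. Exp \<mu>) \<Otimes>\<^sub>M Exp \<mu>) (PiM (insert c N') (\<lambda>_. Exp \<mu>))"
proof -
  have "(\<lambda>p. \<lambda>i\<in>insert c N'. if i = c then snd p else fst p i) \<in> measurable (PiM N' (\<lambda>_. Exp \<mu>) \<Otimes>\<^sub>M Exp \<mu>) (PiM (insert c N') (\<lambda>_. Exp \<mu>))"
  proof (rule measurable_restrict)
    fix i assume i: "i \<in> insert c N'"
    show "(\<lambda>p. if i = c then snd p else fst p i) \<in> measurable (PiM N' (\<lambda>_. Exp \<mu>) \<Otimes>\<^sub>M Exp \<mu>) (Exp \<mu>)"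
    proof (cases "i = c")
      case True then show ?thesis by simp
    next
      case False
      then have "i \<in> N'" using i by simp
      then have "(\<lambda>p. fst p i) \<in> measurable (PiM N' (\<lambda>_. Exp \<mu>) \<Otimes>\<^sub>M Exp \<mu>) (Exp \<mu>)"
        by (intro measurable_compose[OF measurable_fst measurable_component_singleton])
      then show ?thesis using False by simp
    qed
  qed
  moreover have "\<And>p. p \<in> space (PiM N' (\<lambda>_. Exp \<mu>) \<Otimes>\<^sub>M Exp \<mu>) \<Longrightarrow>
      (\<lambda>i\<in>insert c N'. if i = c then snd p else fst p i) = (case p of (x, y) \<Rightarrow> x(c := y))"
    using assms by (auto simp: space_pair_measure space_PiM PiE_def extensional_def fun_eq_iff)
  ultimately show ?thesis by (rule measurable_cong[THEN iffD1, rotated])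
qed

lemma shift_coord:
  fixes N :: "nat set"
  assumes \<mu>: "\<mu> > 0" and t: "t \<ge> 0" and N: "finite N" "c \<in> N"
    and K[measurable]: "K \<in> borel_measurable (PiM N (\<lambda>_. Exp \<mu>))"
  shows "(\<integral>\<^sup>+z. indicator {t..} (z c) * K (\<lambda>i\<in>N. z i - (if i = c then t else 0)) \<partial>PiM N (\<lambda>_. Exp \<mu>))
       = ennreal (exp (- (\<mu> * t))) * (\<integral>\<^sup>+z. K z \<partial>PiM N (\<lambda>_. Exp \<mu>))"
proof -
  interpret product_sigma_finite "\<lambda>_::nat. Exp \<mu>" using psf_Exp[OF \<mu>] .
  define N' where "N' = N - {c}"
  have NN: "N = insert c N'" "c \<notin> N'" "finite N'" using N by (auto simp: N'_def)
  let ?F = "\<lambda>z. indicator {t..} (z c) * K (\<lambda>i\<in>N. z i - (if i = c then t else 0))"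
  have Fm: "?F \<in> borel_measurable (PiM N (\<lambda>_. Exp \<mu>))"
  proof -
    have "(\<lambda>z. K (\<lambda>i\<in>N. z i - (if i = c then t else 0))) \<in> borel_measurable (PiM N (\<lambda>_. Exp \<mu>))"
      by (rule measurable_compose[OF meas_shiftmap K])
    moreover have "(\<lambda>z. indicator {t..} (z c) :: ennreal) \<in> borel_measurable (PiM N (\<lambda>_. Exp \<mu>))"
      using N by measurable
    ultimately show ?thesis by measurable
  qed
  have "(\<integral>\<^sup>+z. ?F z \<partial>PiM N (\<lambda>_. Exp \<mu>)) = (\<integral>\<^sup>+x. (\<integral>\<^sup>+y. ?F (x(c := y)) \<partial>Exp \<mu>) \<partial>PiM N' (\<lambda>_. Exp \<mu>))"
    using product_nn_integral_insert[of N' c ?F] Fm NN by simp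
  also have "\<dots> = (\<integral>\<^sup>+x. ennreal (exp (- (\<mu> * t))) * (\<integral>\<^sup>+y. K (x(c := y)) \<partial>Exp \<mu>) \<partial>PiM N' (\<lambda>_. Exp \<mu>))"
  proof (intro nn_integral_cong)
    fix x assume x: "x \<in> space (PiM N' (\<lambda>_. Exp \<mu>))"
    have ext: "x \<in> extensional N'" using x by (simp add: space_PiM PiE_def)
    have upd: "(\<lambda>i\<in>N. (x(c := y)) i - (if i = c then t else 0)) = x(c := y - t)" for y
      using ext NN by (auto simp: fun_eq_iff extensional_def)
    have Km: "(\<lambda>y. K (x(c := y))) \<in> borel_measurable borel"
    proof -
      have "(\<lambda>y. x(c := y)) \<in> measurable (Exp \<mu>) (PiM (insert c N') (\<lambda>_. Exp \<mu>))"
        using measurable_component_update[OF x NN(2)] .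
      then have "(\<lambda>y. K (x(c := y))) \<in> borel_measurable (Exp \<mu>)"
        using K NN(1) by (intro measurable_compose[where f="\<lambda>y. x(c := y)" and g=K]) (simp_all only:)
      then show ?thesis by (simp only: measurable_cong_sets[OF sets_Exp[of \<mu>] refl])
    qed
    show "(\<integral>\<^sup>+y. ?F (x(c := y)) \<partial>Exp \<mu>) = ennreal (exp (- (\<mu> * t))) * (\<integral>\<^sup>+y. K (x(c := y)) \<partial>Exp \<mu>)"
      unfolding upd using Exp_shift1[OF \<mu> t Km] by simp
  qed
  also have "\<dots> = ennreal (exp (- (\<mu> * t))) * (\<integral>\<^sup>+x. (\<integral>\<^sup>+y. K (x(c := y)) \<partial>Exp \<mu>) \<partial>PiM N' (\<lambda>_. Exp \<mu>))"
  proof (rule nn_integral_cmult)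
    interpret E: prob_space "Exp \<mu>" using prob_space_Exp[OF \<mu>] .
    have "(\<lambda>(x, y). K (x(c := y))) \<in> borel_measurable (PiM N' (\<lambda>_. Exp \<mu>) \<Otimes>\<^sub>M Exp \<mu>)"
      using measurable_compose[OF meas_upd[OF NN(2), of \<mu>]] K NN(1) by (simp add: split_beta')
    then show "(\<lambda>x. \<integral>\<^sup>+ y. K (x(c := y)) \<partial>Exp \<mu>) \<in> borel_measurable (PiM N' (\<lambda>_. Exp \<mu>))"
      by (rule sigma_finite_measure.borel_measurable_nn_integral[OF prob_space_imp_sigma_finite[OF prob_space_Exp[OF \<mu>]], of "\<lambda>x y. K (x(c := y))", simplified])
  qed
  also have "(\<integral>\<^sup>+x. (\<integral>\<^sup>+y. K (x(c := y)) \<partial>Exp \<mu>) \<partial>PiM N' (\<lambda>_. Exp \<mu>)) = (\<integral>\<^sup>+z. K z \<partial>PiM N (\<lambda>_. Exp \<mu>))"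
    using product_nn_integral_insert[of N' c K] K NN by simp
  finally show ?thesis .
qed


lemma shift_multi:
  fixes N :: "nat set"
  assumes \<mu>: "\<mu> > 0" and t: "t \<ge> 0" and N: "finite N" and C: "C \<subseteq> N"
    and H: "H \<in> borel_measurable (PiM N (\<lambda>_. Exp \<mu>))"
  shows "(\<integral>\<^sup>+z. (if \<forall>i\<in>C. t \<le> z i then H (\<lambda>i\<in>N. z i - (if i \<in> C then t else 0)) else 0) \<partial>PiM N (\<lambda>_. Exp \<mu>))
       = ennreal (exp (- (\<mu> * t))) ^ card C * (\<integral>\<^sup>+z. H z \<partial>PiM N (\<lambda>_. Exp \<mu>))"
proof -
  have "finite C" using C N by (rule finite_subset)
  then show ?thesis using C H
  proof (induction C arbitrary: H rule: finite_induct)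
    case empty
    have "(\<integral>\<^sup>+z. (if \<forall>i\<in>{}. t \<le> z i then H (\<lambda>i\<in>N. z i - (if i \<in> {} then t else 0)) else 0) \<partial>PiM N (\<lambda>_. Exp \<mu>))
        = (\<integral>\<^sup>+z. H z \<partial>PiM N (\<lambda>_. Exp \<mu>))"
    proof (intro nn_integral_cong)
      fix z assume "z \<in> space (PiM N (\<lambda>_. Exp \<mu>))"
      then have "(\<lambda>i\<in>N. z i - (if i \<in> {} then t else 0)) = z"
        by (auto simp: space_PiM PiE_def extensional_def fun_eq_iff)
      then show "(if \<forall>i\<in>{}. t \<le> z i then H (\<lambda>i\<in>N. z i - (if i \<in> {} then t else 0)) else 0) = H z" by simp
    qed
    then show ?case by simp
  next
    case (insert c C')
    define K where "K w = (if \<forall>i\<in>C'. t \<le> w i then H (\<lambda>i\<in>N. w i - (if i \<in> C' then t else 0)) else 0)" for w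
    have cN: "c \<in> N" and C'N: "C' \<subseteq> N" using insert by auto
    note Hm = insert.prems(2)
    have Km: "K \<in> borel_measurable (PiM N (\<lambda>_. Exp \<mu>))"
    proof -
      have "(\<lambda>w. H (\<lambda>i\<in>N. w i - (if i \<in> C' then t else 0))) \<in> borel_measurable (PiM N (\<lambda>_. Exp \<mu>))"
        by (rule measurable_compose[OF meas_shiftmap Hm])
      moreover have "{w \<in> space (PiM N (\<lambda>_. Exp \<mu>)). \<forall>i\<in>C'. t \<le> w i} \<in> sets (PiM N (\<lambda>_. Exp \<mu>))"
      proof -
        have "\<And>i. i \<in> C' \<Longrightarrow> {w \<in> space (PiM N (\<lambda>_. Exp \<mu>)). t \<le> w i} \<in> sets (PiM N (\<lambda>_. Exp \<mu>))"
        proof -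
          fix i assume "i \<in> C'"
          then have "{w \<in> space (PiM N (\<lambda>_. Exp \<mu>)). w i \<in> {t..}} \<in> sets (PiM N (\<lambda>_. Exp \<mu>))"
            using C'N by (intro sets_Collect_single) auto
          then show "{w \<in> space (PiM N (\<lambda>_. Exp \<mu>)). t \<le> w i} \<in> sets (PiM N (\<lambda>_. Exp \<mu>))" by simp
        qed
        then show ?thesis using insert(1) by (intro sets.sets_Collect_finite_All) auto
      qed
      ultimately show ?thesis unfolding K_def
        by (intro measurable_If) auto
    qed
    have "(\<integral>\<^sup>+z. (if \<forall>i\<in>insert c C'. t \<le> z i then H (\<lambda>i\<in>N. z i - (if i \<in> insert c C' then t else 0)) else 0) \<partial>PiM N (\<lambda>_. Exp \<mu>))
        = (\<integral>\<^sup>+z. indicator {t..} (z c) * K (\<lambda>i\<in>N. z i - (if i = c then t else 0)) \<partial>PiM N (\<lambda>_. Exp \<mu>))"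
    proof (intro nn_integral_cong)
      fix z assume z: "z \<in> space (PiM N (\<lambda>_. Exp \<mu>))"
      let ?z' = "\<lambda>i\<in>N. z i - (if i = c then t else 0)"
      have e1: "(\<forall>i\<in>C'. t \<le> ?z' i) = (\<forall>i\<in>C'. t \<le> z i)" using insert(2) C'N by auto
      have e2: "(\<lambda>i\<in>N. ?z' i - (if i \<in> C' then t else 0)) = (\<lambda>i\<in>N. z i - (if i \<in> insert c C' then t else 0))"
        using insert(2) by (auto simp: fun_eq_iff)
      show "(if \<forall>i\<in>insert c C'. t \<le> z i then H (\<lambda>i\<in>N. z i - (if i \<in> insert c C' then t else 0)) else 0)
          = indicator {t..} (z c) * K ?z'"
        unfolding K_def e1 e2 by (auto simp: indicator_def)
    qed
    also have "\<dots> = ennreal (exp (- (\<mu> * t))) * (\<integral>\<^sup>+z. K z \<partial>PiM N (\<lambda>_. Exp \<mu>))"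
      by (rule shift_coord[OF \<mu> t N cN Km])
    also have "(\<integral>\<^sup>+z. K z \<partial>PiM N (\<lambda>_. Exp \<mu>)) = ennreal (exp (- (\<mu> * t))) ^ card C' * (\<integral>\<^sup>+z. H z \<partial>PiM N (\<lambda>_. Exp \<mu>))"
      unfolding K_def using insert.IH[OF C'N Hm] .
    finally show ?case using insert(1,2) by (simp add: mult.assoc)
  qed
qed


lemma skip_all:
  assumes "a < k"
  shows "(\<forall>i<k. i \<noteq> a \<longrightarrow> P i) \<longleftrightarrow> (\<forall>i'<k - 1. P (skip a i'))"
proof
  assume "\<forall>i<k. i \<noteq> a \<longrightarrow> P i"
  then show "\<forall>i'<k - 1. P (skip a i')" using assms by (auto simp: skip_def)
next
  assume H: "\<forall>i'<k - 1. P (skip a i')"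
  show "\<forall>i<k. i \<noteq> a \<longrightarrow> P i"
  proof (intro allI impI)
    fix i assume i: "i < k" "i \<noteq> a"
    define i' where "i' = (if i < a then i else i - 1)"
    have "skip a i' = i" "i' < k - 1" using i assms by (auto simp: skip_def i'_def)
    then show "P i" using H by metis
  qed
qed

lemma skip_less: "i < n - 1 \<Longrightarrow> a < n \<Longrightarrow> skip a i < n"
  by (auto simp: skip_def)

lemma meas_Phi:
  fixes n :: nat
  assumes a: "a < n"
  shows "(\<lambda>s. \<lambda>i\<in>{..<n-1}. s (skip a i) - (if i < k - 1 then s a else 0))
     \<in> measurable (PiM {..<n} (\<lambda>_. Exp \<mu>)) (PiM {..<n-1} (\<lambda>_. Exp \<mu>))"
proof (rule measurable_restrict)
  fix i assume i: "i \<in> {..<n-1}"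
  then have si: "skip a i \<in> {..<n}" using a skip_less by auto
  have "(\<lambda>s. s (skip a i) - (if i < k - 1 then s a else 0)) \<in> borel_measurable (PiM {..<n} (\<lambda>_. Exp \<mu>))"
  proof (cases "i < k - 1")
    case True
    have aN: "a \<in> {..<n}" using a by simp
    have "(\<lambda>s. s (skip a i) - s a) \<in> borel_measurable (PiM {..<n} (\<lambda>_. Exp \<mu>))"
      using si aN by measurable
    then show ?thesis using True by simp
  next
    case False
    have "(\<lambda>s. s (skip a i)) \<in> borel_measurable (PiM {..<n} (\<lambda>_. Exp \<mu>))"
      using si by measurable
    then show ?thesis using False by simp
  qed
  then show "(\<lambda>s. s (skip a i) - (if i < k - 1 then s a else 0)) \<in> measurable (PiM {..<n} (\<lambda>_. Exp \<mu>)) (Exp \<mu>)"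
    by (simp only: measurable_cong_sets[OF refl sets_Exp[of \<mu>]])
qed


lemma comp_borel:
  fixes N :: "nat set"
  shows "i \<in> N \<Longrightarrow> (\<lambda>s. s i) \<in> borel_measurable (PiM N (\<lambda>_. Exp \<mu>))"
  using measurable_component_singleton[of i N "\<lambda>_. Exp \<mu>"]
  by (simp only: measurable_cong_sets[OF refl sets_Exp[of \<mu>]])

lemma core:
  fixes G :: "real \<Rightarrow> (nat \<Rightarrow> real) \<Rightarrow> ennreal" and n :: nat
  assumes \<mu>: "\<mu> > 0" and a: "a < k" and kn: "k \<le> n"
    and G: "(\<lambda>(t, z). G t z) \<in> borel_measurable (borel \<Otimes>\<^sub>M PiM {..<n-1} (\<lambda>_. Exp \<mu>))"
  shows "(\<integral>\<^sup>+s. (if \<forall>i<k. s a \<le> s i then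
            G (s a) (\<lambda>i\<in>{..<n-1}. s (skip a i) - (if i < k - 1 then s a else 0)) else 0) \<partial>PiM {..<n} (\<lambda>_. Exp \<mu>))
       = (\<integral>\<^sup>+y. ennreal (exp (- (\<mu> * y))) ^ (k - 1) * (\<integral>\<^sup>+z. G y z \<partial>PiM {..<n-1} (\<lambda>_. Exp \<mu>)) \<partial>Exp \<mu>)"
proof -
  interpret product_sigma_finite "\<lambda>_::nat. Exp \<mu>" using psf_Exp[OF \<mu>] .
  define I where "I = {..<n} - {a}"
  have aI: "a \<notin> I" "finite I" "{..<n} = insert a I" using a kn by (auto simp: I_def)
  let ?Phi = "\<lambda>s. \<lambda>i\<in>{..<n-1}. s (skip a i) - (if i < k - 1 then s a else 0)"
  let ?f = "\<lambda>s. if \<forall>i<k. s a \<le> s i then G (s a) (?Phi s) else 0"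
  have an: "a < n" using a kn by simp
  have Gy: "G y \<in> borel_measurable (PiM {..<n-1} (\<lambda>_. Exp \<mu>))" for y
    using measurable_Pair2[OF G, of y] by simp
  have fm: "?f \<in> borel_measurable (PiM {..<n} (\<lambda>_. Exp \<mu>))"
  proof -
    have "(\<lambda>s. (s a, ?Phi s)) \<in> measurable (PiM {..<n} (\<lambda>_. Exp \<mu>)) (borel \<Otimes>\<^sub>M PiM {..<n-1} (\<lambda>_. Exp \<mu>))"
    proof (rule measurable_Pair)
      show "(\<lambda>s. s a) \<in> borel_measurable (PiM {..<n} (\<lambda>_. Exp \<mu>))" by (rule comp_borel) (simp add: an)
      show "?Phi \<in> measurable (PiM {..<n} (\<lambda>_. Exp \<mu>)) (PiM {..<n-1} (\<lambda>_. Exp \<mu>))"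
        by (rule meas_Phi[OF an])
    qed
    from measurable_compose[OF this G]
    have Gm: "(\<lambda>s. G (s a) (?Phi s)) \<in> borel_measurable (PiM {..<n} (\<lambda>_. Exp \<mu>))" by simp
    have Sm: "{s \<in> space (PiM {..<n} (\<lambda>_. Exp \<mu>)). \<forall>i<k. s a \<le> s i} \<in> sets (PiM {..<n} (\<lambda>_. Exp \<mu>))"
    proof -
      have "\<And>i. i < k \<Longrightarrow> {s \<in> space (PiM {..<n} (\<lambda>_. Exp \<mu>)). s a \<le> s i} \<in> sets (PiM {..<n} (\<lambda>_. Exp \<mu>))"
      proof -
        fix i assume "i < k"
        then have iN: "i \<in> {..<n}" using kn by simp
        have aN: "a \<in> {..<n}" using an by simp
        show "{s \<in> space (PiM {..<n} (\<lambda>_. Exp \<mu>)). s a \<le> s i} \<in> sets (PiM {..<n} (\<lambda>_. Exp \<mu>))"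
          by (rule borel_measurable_le[OF comp_borel[OF aN] comp_borel[OF iN]])
      qed
      then have "{s \<in> space (PiM {..<n} (\<lambda>_. Exp \<mu>)). \<forall>i\<in>{..<k}. s a \<le> s i} \<in> sets (PiM {..<n} (\<lambda>_. Exp \<mu>))"
        by (intro sets.sets_Collect_finite_All) auto
      moreover have "{s \<in> space (PiM {..<n} (\<lambda>_. Exp \<mu>)). \<forall>i\<in>{..<k}. s a \<le> s i} = {s \<in> space (PiM {..<n} (\<lambda>_. Exp \<mu>)). \<forall>i<k. s a \<le> s i}"
        by blast
      ultimately show ?thesis by (simp only:)
    qed
    show ?thesis
      by (rule measurable_If[OF Gm _ Sm]) simp
  qed
  have "(\<integral>\<^sup>+s. ?f s \<partial>PiM {..<n} (\<lambda>_. Exp \<mu>)) = (\<integral>\<^sup>+y. (\<integral>\<^sup>+x. ?f (x(a := y)) \<partial>PiM I (\<lambda>_. Exp \<mu>)) \<partial>Exp \<mu>)"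
    unfolding aI(3) by (rule product_nn_integral_insert_rev[OF aI(2) aI(1)]) (use fm aI(3) in simp)
  also have "\<dots> = (\<integral>\<^sup>+y. ennreal (exp (- (\<mu> * y))) ^ (k - 1) * (\<integral>\<^sup>+z. G y z \<partial>PiM {..<n-1} (\<lambda>_. Exp \<mu>)) \<partial>Exp \<mu>)"
  proof (rule nn_integral_cong_AE)
    show "AE y in Exp \<mu>. (\<integral>\<^sup>+x. ?f (x(a := y)) \<partial>PiM I (\<lambda>_. Exp \<mu>)) =
        ennreal (exp (- (\<mu> * y))) ^ (k - 1) * (\<integral>\<^sup>+z. G y z \<partial>PiM {..<n-1} (\<lambda>_. Exp \<mu>))"
      using AE_Exp_nonneg
    proof (rule AE_mp, intro AE_I2 impI)
      fix y :: real assume y: "0 \<le> y"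
      define H where "H z = (if \<forall>i\<in>{..<k-1}. y \<le> z i then G y (\<lambda>i\<in>{..<n-1}. z i - (if i \<in> {..<k-1} then y else 0)) else 0)" for z
      let ?rho = "\<lambda>x. \<lambda>i\<in>{..<n-1}. x (skip a i)"
      have rho_m: "?rho \<in> measurable (PiM I (\<lambda>_. Exp \<mu>)) (PiM {..<n-1} (\<lambda>_. Exp \<mu>))"
      proof (rule measurable_restrict)
        fix i assume "i \<in> {..<n-1}"
        then have "skip a i < n" using an by (intro skip_less) simp_all
        then have "skip a i \<in> I" using skip_ne[of a i] unfolding I_def by simp
        then show "(\<lambda>x. x (skip a i)) \<in> measurable (PiM I (\<lambda>_. Exp \<mu>)) (Exp \<mu>)"
          by (rule measurable_component_singleton)
      qed
      have Hm: "H \<in> borel_measurable (PiM {..<n-1} (\<lambda>_. Exp \<mu>))"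
      proof -
        have "(\<lambda>z. G y (\<lambda>i\<in>{..<n-1}. z i - (if i \<in> {..<k-1} then y else 0))) \<in> borel_measurable (PiM {..<n-1} (\<lambda>_. Exp \<mu>))"
          by (rule measurable_compose[OF meas_shiftmap Gy])
        moreover have "{z \<in> space (PiM {..<n-1} (\<lambda>_. Exp \<mu>)). \<forall>i\<in>{..<k-1}. y \<le> z i} \<in> sets (PiM {..<n-1} (\<lambda>_. Exp \<mu>))"
        proof -
          have "\<And>i. i \<in> {..<k-1} \<Longrightarrow> {z \<in> space (PiM {..<n-1} (\<lambda>_. Exp \<mu>)). y \<le> z i} \<in> sets (PiM {..<n-1} (\<lambda>_. Exp \<mu>))"
          proof -
            fix i assume "i \<in> {..<k-1}"
            then have "{z \<in> space (PiM {..<n-1} (\<lambda>_. Exp \<mu>)). z i \<in> {y..}} \<in> sets (PiM {..<n-1} (\<lambda>_. Exp \<mu>))"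
              using kn by (intro sets_Collect_single) auto
            then show "{z \<in> space (PiM {..<n-1} (\<lambda>_. Exp \<mu>)). y \<le> z i} \<in> sets (PiM {..<n-1} (\<lambda>_. Exp \<mu>))" by (simp only: atLeast_iff)
          qed
          then show ?thesis by (intro sets.sets_Collect_finite_All) auto
        qed
        ultimately show ?thesis unfolding H_def by (intro measurable_If) auto
      qed
      have "(\<integral>\<^sup>+x. ?f (x(a := y)) \<partial>PiM I (\<lambda>_. Exp \<mu>)) = (\<integral>\<^sup>+x. H (?rho x) \<partial>PiM I (\<lambda>_. Exp \<mu>))"
      proof (intro nn_integral_cong)
        fix x assume x: "x \<in> space (PiM I (\<lambda>_. Exp \<mu>))"
        have c1: "(\<forall>i<k. (x(a := y)) a \<le> (x(a := y)) i) \<longleftrightarrow> (\<forall>i\<in>{..<k-1}. y \<le> ?rho x i)"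
        proof -
          have "(\<forall>i<k. (x(a := y)) a \<le> (x(a := y)) i) \<longleftrightarrow> (\<forall>i<k. i \<noteq> a \<longrightarrow> y \<le> x i)" by auto
          also have "\<dots> \<longleftrightarrow> (\<forall>i'<k-1. y \<le> x (skip a i'))" by (rule skip_all[OF a])
          also have "\<dots> \<longleftrightarrow> (\<forall>i\<in>{..<k-1}. y \<le> ?rho x i)" using kn by auto
          finally show ?thesis .
        qed
        have c2: "?Phi (x(a := y)) = (\<lambda>i\<in>{..<n-1}. ?rho x i - (if i \<in> {..<k-1} then y else 0))"
          by (auto simp: fun_eq_iff skip_ne)
        show "?f (x(a := y)) = H (?rho x)"
          unfolding H_def c2 using c1 by simp
      qed
      also have "\<dots> = (\<integral>\<^sup>+z. H z \<partial>distr (PiM I (\<lambda>_. Exp \<mu>)) (PiM {..<n-1} (\<lambda>_. Exp \<mu>)) ?rho)"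
      proof -
        have Hm': "H \<in> borel_measurable (distr (PiM I (\<lambda>_. Exp \<mu>)) (PiM {..<n-1} (\<lambda>_. Exp \<mu>)) ?rho)"
          using Hm by (simp only: measurable_cong_sets[OF sets_distr refl])
        show ?thesis by (rule nn_integral_distr[symmetric, OF rho_m Hm'])
      qed
      also have "distr (PiM I (\<lambda>_. Exp \<mu>)) (PiM {..<n-1} (\<lambda>_. Exp \<mu>)) ?rho = PiM {..<n-1} (\<lambda>_. Exp \<mu>)"
      proof -
        have "inj_on (skip a) {..<n-1}" using skip_inj by (rule inj_on_subset) simp
        moreover have "skip a \<in> {..<n-1} \<rightarrow> I" using an by (auto simp: I_def skip_less skip_ne)
        ultimately show ?thesis
          using distr_PiM_reindex[of I "\<lambda>_. Exp \<mu>" "skip a" "{..<n-1}"] prob_space_Exp[OF \<mu>] by simp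
      qed
      also have "(\<integral>\<^sup>+z. H z \<partial>PiM {..<n-1} (\<lambda>_. Exp \<mu>)) = ennreal (exp (- (\<mu> * y))) ^ card {..<k-1} * (\<integral>\<^sup>+z. G y z \<partial>PiM {..<n-1} (\<lambda>_. Exp \<mu>))"
        unfolding H_def by (rule shift_multi[OF \<mu> y]) (use kn Gy in auto)
      finally show "(\<integral>\<^sup>+x. ?f (x(a := y)) \<partial>PiM I (\<lambda>_. Exp \<mu>)) =
        ennreal (exp (- (\<mu> * y))) ^ (k - 1) * (\<integral>\<^sup>+z. G y z \<partial>PiM {..<n-1} (\<lambda>_. Exp \<mu>))" by simp
    qed
  qed
  finally show ?thesis .
qed


lemma AE_nonneg_PiM:
  fixes N :: "nat set"
  assumes \<mu>: "\<mu> > 0" and N: "finite N"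
  shows "AE s in PiM N (\<lambda>_. Exp \<mu>). \<forall>i\<in>N. 0 \<le> s i"
proof (rule AE_finite_allI[OF N])
  fix i assume "i \<in> N"
  then show "AE s in PiM N (\<lambda>_. Exp \<mu>). 0 \<le> s i"
    using AE_PiM_component[of N "\<lambda>_. Exp \<mu>" i "\<lambda>y. 0 \<le> y"] prob_space_Exp[OF \<mu>] AE_Exp_nonneg
    by blast
qed

lemma AE_noties_pair:
  fixes N :: "nat set"
  assumes \<mu>: "\<mu> > 0" and N: "finite N" and i: "i \<in> N" and i': "i' \<in> N" and ne: "i \<noteq> i'"
  shows "AE s in PiM N (\<lambda>_. Exp \<mu>). s i \<noteq> s i'"
proof -
  interpret product_sigma_finite "\<lambda>_::nat. Exp \<mu>" using psf_Exp[OF \<mu>] .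
  define A where "A = {s \<in> space (PiM N (\<lambda>_. Exp \<mu>)). s i = s i'}"
  have Aset: "A \<in> sets (PiM N (\<lambda>_. Exp \<mu>))"
    unfolding A_def using comp_borel[OF i] comp_borel[OF i'] by measurable
  define N' where "N' = N - {i}"
  have NN: "N = insert i N'" "i \<notin> N'" "finite N'" "i' \<in> N'" using N i i' ne by (auto simp: N'_def)
  have "emeasure (PiM N (\<lambda>_. Exp \<mu>)) A = (\<integral>\<^sup>+s. indicator A s \<partial>PiM N (\<lambda>_. Exp \<mu>))"
    using Aset by simp
  also have "\<dots> = (\<integral>\<^sup>+x. (\<integral>\<^sup>+y. indicator A (x(i := y)) \<partial>Exp \<mu>) \<partial>PiM N' (\<lambda>_. Exp \<mu>))"
    unfolding NN(1) by (rule product_nn_integral_insert[OF NN(3) NN(2)]) (use Aset NN(1) in simp)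
  also have "\<dots> = (\<integral>\<^sup>+x. 0 \<partial>PiM N' (\<lambda>_. Exp \<mu>))"
  proof (intro nn_integral_cong)
    fix x assume x: "x \<in> space (PiM N' (\<lambda>_. Exp \<mu>))"
    have "\<And>y. indicator A (x(i := y)) = (indicator {x i'} y :: ennreal)"
    proof -
      fix y
      have "x(i := y) \<in> space (PiM N (\<lambda>_. Exp \<mu>))"
        using x NN(1) by (auto simp: space_PiM PiE_def extensional_def)
      then show "indicator A (x(i := y)) = (indicator {x i'} y :: ennreal)"
        using ne by (auto simp: A_def indicator_def)
    qed
    moreover have "(\<integral>\<^sup>+y. indicator {x i'} y \<partial>Exp \<mu>) = 0"
      using AE_Exp_ne[of "x i'" \<mu>] by (subst nn_integral_0_iff_AE) (auto simp: indicator_def)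
    ultimately show "(\<integral>\<^sup>+y. indicator A (x(i := y)) \<partial>Exp \<mu>) = 0" by simp
  qed
  finally have "emeasure (PiM N (\<lambda>_. Exp \<mu>)) A = 0" by simp
  then show ?thesis
    using AE_iff_measurable[OF Aset, of "\<lambda>s. s i \<noteq> s i'"] by (simp add: A_def)
qed

lemma AE_noties:
  fixes n :: nat
  assumes \<mu>: "\<mu> > 0"
  shows "AE s in PiM {..<n} (\<lambda>_. Exp \<mu>). \<forall>i\<in>{..<n}. \<forall>i'\<in>{..<n}. i \<noteq> i' \<longrightarrow> s i \<noteq> s i'"
  by (intro AE_finite_allI) (auto intro: AE_noties_pair[OF \<mu>])


lemma min_exists:
  fixes s :: "nat \<Rightarrow> real"
  assumes "1 \<le> k"
  shows "\<exists>a<k. \<forall>i<k. s a \<le> s i"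
proof -
  have fin: "finite (s ` {..<k})" by simp
  have "0 \<in> {..<k}" using assms by simp
  then have ne: "s ` {..<k} \<noteq> {}" by blast
  have "Min (s ` {..<k}) \<in> s ` {..<k}" using Min_in[OF fin ne] .
  then obtain a where a: "a < k" "s a = Min (s ` {..<k})" by auto
  have "\<forall>i<k. s a \<le> s i" using a(2) fin by auto
  then show ?thesis using a(1) by blast
qed

lemma sets_min:
  fixes n :: nat
  assumes a: "a < k" and kn: "k \<le> n"
  shows "{s \<in> space (PiM {..<n} (\<lambda>_. Exp \<mu>)). \<forall>i<k. s a \<le> s i} \<in> sets (PiM {..<n} (\<lambda>_. Exp \<mu>))"
proof -
  have "\<And>i. i \<in> {..<k} \<Longrightarrow> {s \<in> space (PiM {..<n} (\<lambda>_. Exp \<mu>)). s a \<le> s i} \<in> sets (PiM {..<n} (\<lambda>_. Exp \<mu>))"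
  proof -
    fix i assume "i \<in> {..<k}"
    then have iN: "i \<in> {..<n}" using kn by simp
    have aN: "a \<in> {..<n}" using a kn by simp
    show "{s \<in> space (PiM {..<n} (\<lambda>_. Exp \<mu>)). s a \<le> s i} \<in> sets (PiM {..<n} (\<lambda>_. Exp \<mu>))"
      by (rule borel_measurable_le[OF comp_borel[OF aN] comp_borel[OF iN]])
  qed
  then have "{s \<in> space (PiM {..<n} (\<lambda>_. Exp \<mu>)). \<forall>i\<in>{..<k}. s a \<le> s i} \<in> sets (PiM {..<n} (\<lambda>_. Exp \<mu>))"
    by (intro sets.sets_Collect_finite_All) auto
  moreover have "{s \<in> space (PiM {..<n} (\<lambda>_. Exp \<mu>)). \<forall>i\<in>{..<k}. s a \<le> s i} = {s \<in> space (PiM {..<n} (\<lambda>_. Exp \<mu>)). \<forall>i<k. s a \<le> s i}"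
    by blast
  ultimately show ?thesis by (simp only:)
qed

lemma partition:
  fixes n :: nat and f :: "(nat \<Rightarrow> real) \<Rightarrow> ennreal"
  assumes \<mu>: "\<mu> > 0" and k: "1 \<le> k" "k \<le> n" and f: "f \<in> borel_measurable (PiM {..<n} (\<lambda>_. Exp \<mu>))"
  shows "(\<integral>\<^sup>+s. f s \<partial>PiM {..<n} (\<lambda>_. Exp \<mu>)) = (\<Sum>a<k. \<integral>\<^sup>+s. (if \<forall>i<k. s a \<le> s i then f s else 0) \<partial>PiM {..<n} (\<lambda>_. Exp \<mu>))"
proof -
  have m: "\<And>a. a \<in> {..<k} \<Longrightarrow> (\<lambda>s. if \<forall>i<k. s a \<le> s i then f s else 0) \<in> borel_measurable (PiM {..<n} (\<lambda>_. Exp \<mu>))"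
    by (rule measurable_If[OF f _ sets_min]) (use k in auto)
  have "(\<Sum>a<k. \<integral>\<^sup>+s. (if \<forall>i<k. s a \<le> s i then f s else 0) \<partial>PiM {..<n} (\<lambda>_. Exp \<mu>))
      = (\<integral>\<^sup>+s. (\<Sum>a<k. if \<forall>i<k. s a \<le> s i then f s else 0) \<partial>PiM {..<n} (\<lambda>_. Exp \<mu>))"
    by (rule nn_integral_sum[symmetric]) (rule m)
  also have "\<dots> = (\<integral>\<^sup>+s. f s \<partial>PiM {..<n} (\<lambda>_. Exp \<mu>))"
  proof (rule nn_integral_cong_AE)
    show "AE s in PiM {..<n} (\<lambda>_. Exp \<mu>). (\<Sum>a<k. if \<forall>i<k. s a \<le> s i then f s else 0) = f s"
      using AE_noties[OF \<mu>, of n]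
    proof (rule AE_mp, intro AE_I2 impI)
      fix s :: "nat \<Rightarrow> real"
      assume nt: "\<forall>i\<in>{..<n}. \<forall>i'\<in>{..<n}. i \<noteq> i' \<longrightarrow> s i \<noteq> s i'"
      obtain a0 where a0: "a0 < k" "\<forall>i<k. s a0 \<le> s i" using min_exists[OF k(1)] by blast
      have iff: "\<And>a. a < k \<Longrightarrow> (\<forall>i<k. s a \<le> s i) \<longleftrightarrow> a = a0"
      proof
        fix a assume a: "a < k" "\<forall>i<k. s a \<le> s i"
        then have "s a = s a0" using a0 by (meson order.antisym)
        then show "a = a0" using nt a(1) a0(1) k by (meson lessThan_iff order.strict_trans2)
      next
        fix a assume "a = a0" then show "\<forall>i<k. s a \<le> s i" using a0 by simp
      qed
      have "(\<Sum>a<k. if \<forall>i<k. s a \<le> s i then f s else 0) = (\<Sum>a<k. if a = a0 then f s else 0)"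
        by (intro sum.cong refl) (simp add: iff)
      also have "\<dots> = f s" using a0(1) by simp
      finally show "(\<Sum>a<k. if \<forall>i<k. s a \<le> s i then f s else 0) = f s" .
    qed
  qed
  finally show ?thesis by simp
qed

lemma recur:
  fixes n :: nat and Psi :: "(nat \<Rightarrow> real) \<Rightarrow> ennreal" and G :: "nat \<Rightarrow> real \<Rightarrow> (nat \<Rightarrow> real) \<Rightarrow> ennreal"
  assumes \<mu>: "\<mu> > 0" and k: "1 \<le> k" "k \<le> n"
    and Psi: "Psi \<in> borel_measurable (PiM {..<n} (\<lambda>_. Exp \<mu>))"
    and Gm: "\<And>a. a < k \<Longrightarrow> (\<lambda>(t, z). G a t z) \<in> borel_measurable (borel \<Otimes>\<^sub>M PiM {..<n-1} (\<lambda>_. Exp \<mu>))"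
    and eq: "\<And>a s. a < k \<Longrightarrow> s \<in> space (PiM {..<n} (\<lambda>_. Exp \<mu>)) \<Longrightarrow> (\<forall>i<n. 0 \<le> s i) \<Longrightarrow> (\<forall>i<k. s a \<le> s i) \<Longrightarrow>
        Psi s = G a (s a) (\<lambda>i\<in>{..<n-1}. s (skip a i) - (if i < k - 1 then s a else 0))"
  shows "(\<integral>\<^sup>+s. Psi s \<partial>PiM {..<n} (\<lambda>_. Exp \<mu>)) =
    (\<Sum>a<k. \<integral>\<^sup>+y. ennreal (exp (- (\<mu> * y))) ^ (k - 1) * (\<integral>\<^sup>+z. G a y z \<partial>PiM {..<n-1} (\<lambda>_. Exp \<mu>)) \<partial>Exp \<mu>)"
proof -
  have "(\<integral>\<^sup>+s. Psi s \<partial>PiM {..<n} (\<lambda>_. Exp \<mu>)) = (\<Sum>a<k. \<integral>\<^sup>+s. (if \<forall>i<k. s a \<le> s i then Psi s else 0) \<partial>PiM {..<n} (\<lambda>_. Exp \<mu>))"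
    by (rule partition[OF \<mu> k Psi])
  also have "\<dots> = (\<Sum>a<k. \<integral>\<^sup>+y. ennreal (exp (- (\<mu> * y))) ^ (k - 1) * (\<integral>\<^sup>+z. G a y z \<partial>PiM {..<n-1} (\<lambda>_. Exp \<mu>)) \<partial>Exp \<mu>)"
  proof (rule sum.cong[OF refl])
    fix a assume a: "a \<in> {..<k}"
    have "(\<integral>\<^sup>+s. (if \<forall>i<k. s a \<le> s i then Psi s else 0) \<partial>PiM {..<n} (\<lambda>_. Exp \<mu>)) =
      (\<integral>\<^sup>+s. (if \<forall>i<k. s a \<le> s i then G a (s a) (\<lambda>i\<in>{..<n-1}. s (skip a i) - (if i < k - 1 then s a else 0)) else 0) \<partial>PiM {..<n} (\<lambda>_. Exp \<mu>))"
    proof (rule nn_integral_cong_AE)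
      show "AE s in PiM {..<n} (\<lambda>_. Exp \<mu>). (if \<forall>i<k. s a \<le> s i then Psi s else 0) =
          (if \<forall>i<k. s a \<le> s i then G a (s a) (\<lambda>i\<in>{..<n-1}. s (skip a i) - (if i < k - 1 then s a else 0)) else 0)"
        using AE_nonneg_PiM[OF \<mu> finite_lessThan[of n]] AE_space[of "PiM {..<n} (\<lambda>_. Exp \<mu>)"]
      proof (rule AE_mp[OF AE_conjI], intro AE_I2 impI)
        fix s assume "(\<forall>i\<in>{..<n}. 0 \<le> s i) \<and> s \<in> space (PiM {..<n} (\<lambda>_. Exp \<mu>))"
        then show "(if \<forall>i<k. s a \<le> s i then Psi s else 0) =
          (if \<forall>i<k. s a \<le> s i then G a (s a) (\<lambda>i\<in>{..<n-1}. s (skip a i) - (if i < k - 1 then s a else 0)) else 0)"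
          using eq[of a s] a by auto
      qed
    qed
    also have "\<dots> = (\<integral>\<^sup>+y. ennreal (exp (- (\<mu> * y))) ^ (k - 1) * (\<integral>\<^sup>+z. G a y z \<partial>PiM {..<n-1} (\<lambda>_. Exp \<mu>)) \<partial>Exp \<mu>)"
      by (rule core[OF \<mu> _ k(2) Gm]) (use a in auto)
    finally show "(\<integral>\<^sup>+s. (if \<forall>i<k. s a \<le> s i then Psi s else 0) \<partial>PiM {..<n} (\<lambda>_. Exp \<mu>)) =
      (\<integral>\<^sup>+y. ennreal (exp (- (\<mu> * y))) ^ (k - 1) * (\<integral>\<^sup>+z. G a y z \<partial>PiM {..<n-1} (\<lambda>_. Exp \<mu>)) \<partial>Exp \<mu>)" .
  qed
  finally show ?thesis .
qed


lemma meas_nd: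
  fixes f :: "'a \<Rightarrow> nat \<Rightarrow> real"
  assumes m: "m \<ge> 1" and f: "\<And>i. i < n \<Longrightarrow> (\<lambda>x. f x i) \<in> borel_measurable M" and g: "g \<in> borel_measurable M"
  shows "(\<lambda>x. num_departures m n (g x) (f x)) \<in> measurable M (count_space UNIV)"
  unfolding num_departures_def
proof (rule measurable_card)
  fix i
  show "{x \<in> space M. i \<in> {i. i < n \<and> departure m (f x) i \<le> g x}} \<in> sets M"
  proof (cases "i < n")
    case True
    have "(\<lambda>x. departure m (f x) i) \<in> borel_measurable M"
      by (rule meas_dep[OF m]) (use f True in auto)
    then have "{x \<in> space M. departure m (f x) i \<le> g x} \<in> sets M"
      by (rule borel_measurable_le[OF _ g])
    then show ?thesis using True by simp
  qed simp
qed

lemma sets_nd: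
  fixes f :: "'a \<Rightarrow> nat \<Rightarrow> real"
  assumes m: "m \<ge> 1" and f: "\<And>i. i < n \<Longrightarrow> (\<lambda>x. f x i) \<in> borel_measurable M" and g: "g \<in> borel_measurable M"
  shows "{x \<in> space M. num_departures m n (g x) (f x) = d} \<in> sets M"
proof -
  have "(\<lambda>x. num_departures m n (g x) (f x)) -` {d} \<inter> space M \<in> sets M"
    by (rule measurable_sets[OF meas_nd[OF m f g]]) auto
  moreover have "(\<lambda>x. num_departures m n (g x) (f x)) -` {d} \<inter> space M = {x \<in> space M. num_departures m n (g x) (f x) = d}"
    by blast
  ultimately show ?thesis by (simp only:)
qed


definition Rd :: "real \<Rightarrow> nat \<Rightarrow> nat \<Rightarrow> real \<Rightarrow> nat \<Rightarrow> ennreal" where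
  "Rd \<mu> m n h d = emeasure (PiM {..<n} (\<lambda>_. Exp \<mu>)) {s \<in> space (PiM {..<n} (\<lambda>_. Exp \<mu>)). num_departures m n h s = d}"

definition Rj :: "real \<Rightarrow> nat \<Rightarrow> nat \<Rightarrow> nat \<Rightarrow> real \<Rightarrow> nat \<Rightarrow> ennreal" where
  "Rj \<mu> m n j h d = emeasure (PiM {..<n} (\<lambda>_. Exp \<mu>)) {s \<in> space (PiM {..<n} (\<lambda>_. Exp \<mu>)). h < s j \<and> num_departures m n h s = d}"

lemma sets_Rd:
  fixes n :: nat
  assumes m: "m \<ge> 1"
  shows "{s \<in> space (PiM {..<n} (\<lambda>_. Exp \<mu>)). num_departures m n h s = d} \<in> sets (PiM {..<n} (\<lambda>_. Exp \<mu>))"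
  using sets_nd[OF m, of n "\<lambda>s. s" "PiM {..<n} (\<lambda>_. Exp \<mu>)" "\<lambda>_. h" d] comp_borel by simp

lemma sets_Rj:
  fixes n :: nat
  assumes m: "m \<ge> 1" and j: "j < n"
  shows "{s \<in> space (PiM {..<n} (\<lambda>_. Exp \<mu>)). h < s j \<and> num_departures m n h s = d} \<in> sets (PiM {..<n} (\<lambda>_. Exp \<mu>))"
proof -
  have "{s \<in> space (PiM {..<n} (\<lambda>_. Exp \<mu>)). h < s j} \<in> sets (PiM {..<n} (\<lambda>_. Exp \<mu>))"
    using j by (intro borel_measurable_less[OF _ comp_borel]) auto
  then have "{s \<in> space (PiM {..<n} (\<lambda>_. Exp \<mu>)). h < s j} \<inter> {s \<in> space (PiM {..<n} (\<lambda>_. Exp \<mu>)). num_departures m n h s = d} \<in> sets (PiM {..<n} (\<lambda>_. Exp \<mu>))"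
    using sets_Rd[OF m] by blast
  moreover have "{s \<in> space (PiM {..<n} (\<lambda>_. Exp \<mu>)). h < s j} \<inter> {s \<in> space (PiM {..<n} (\<lambda>_. Exp \<mu>)). num_departures m n h s = d}
     = {s \<in> space (PiM {..<n} (\<lambda>_. Exp \<mu>)). h < s j \<and> num_departures m n h s = d}" by blast
  ultimately show ?thesis by (simp only:)
qed

lemma snd_comp:
  fixes N :: "nat set"
  shows "i \<in> N \<Longrightarrow> (\<lambda>p. snd p i) \<in> borel_measurable (borel \<Otimes>\<^sub>M PiM N (\<lambda>_. Exp \<mu>))"
  using measurable_compose[OF measurable_snd comp_borel[of i N \<mu>]] by simp

lemma sets_pair_nd:
  fixes n :: nat
  assumes m: "m \<ge> 1"
  shows "{p \<in> space (borel \<Otimes>\<^sub>M PiM {..<n} (\<lambda>_. Exp \<mu>)). num_departures m n (h - fst p) (snd p) = d} \<in> sets (borel \<Otimes>\<^sub>M PiM {..<n} (\<lambda>_. Exp \<mu>))"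
proof (rule sets_nd[OF m])
  fix i assume "i < n"
  then show "(\<lambda>p. snd p i) \<in> borel_measurable (borel \<Otimes>\<^sub>M PiM {..<n} (\<lambda>_. Exp \<mu>))" by (intro snd_comp) simp
next
  show "(\<lambda>p. h - fst p) \<in> borel_measurable (borel \<Otimes>\<^sub>M PiM {..<n} (\<lambda>_. Exp \<mu>))" by measurable
qed


lemma nd_shift_Phi:
  fixes n :: nat
  assumes m: "m \<ge> 1" and k: "k = min n m" and a: "a < k"
    and nn: "\<forall>i<n. 0 \<le> s i" and amin: "\<forall>i<k. s a \<le> s i"
  shows "num_departures m n h s = (if s a \<le> h then Suc (num_departures m (n - 1) (h - s a)
           (\<lambda>i\<in>{..<n-1}. s (skip a i) - (if i < k - 1 then s a else 0))) else 0)"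
  by (rule nd_shift[OF m k a]) (use nn amin in auto)

lemma meas_If01:
  assumes "{x \<in> space M. P x} \<in> sets M"
  shows "(\<lambda>x. if P x then 1 else 0 :: ennreal) \<in> borel_measurable M"
  by (rule measurable_If[OF _ _ assms]) auto

lemma rec_Rd_Suc:
  fixes n :: nat
  assumes \<mu>: "\<mu> > 0" and m: "m \<ge> 1" and n: "n \<ge> 1"
  shows "Rd \<mu> m n h (Suc d) = (\<Sum>a<min n m. \<integral>\<^sup>+y. ennreal (exp (- (\<mu> * y))) ^ (min n m - 1) *
      (\<integral>\<^sup>+z. (if y \<le> h \<and> num_departures m (n - 1) (h - y) z = d then 1 else 0) \<partial>PiM {..<n-1} (\<lambda>_. Exp \<mu>)) \<partial>Exp \<mu>)"
proof -
  define k where "k = min n m"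
  have k: "1 \<le> k" "k \<le> n" using m n by (auto simp: k_def)
  let ?S = "{s \<in> space (PiM {..<n} (\<lambda>_. Exp \<mu>)). num_departures m n h s = Suc d}"
  have S: "?S \<in> sets (PiM {..<n} (\<lambda>_. Exp \<mu>))" by (rule sets_Rd[OF m])
  have "Rd \<mu> m n h (Suc d) = (\<integral>\<^sup>+s. indicator ?S s \<partial>PiM {..<n} (\<lambda>_. Exp \<mu>))"
    unfolding Rd_def using S by simp
  also have "\<dots> = (\<Sum>a<k. \<integral>\<^sup>+y. ennreal (exp (- (\<mu> * y))) ^ (k - 1) *
      (\<integral>\<^sup>+z. (if y \<le> h \<and> num_departures m (n - 1) (h - y) z = d then 1 else 0) \<partial>PiM {..<n-1} (\<lambda>_. Exp \<mu>)) \<partial>Exp \<mu>)"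
  proof (rule recur[OF \<mu> k])
    show "indicator ?S \<in> borel_measurable (PiM {..<n} (\<lambda>_. Exp \<mu>))" using S by simp
  next
    fix a :: nat
    have "{p \<in> space (borel \<Otimes>\<^sub>M PiM {..<n-1} (\<lambda>_. Exp \<mu>)). fst p \<le> h} \<in> sets (borel \<Otimes>\<^sub>M PiM {..<n-1} (\<lambda>_. Exp \<mu>))"
      by measurable
    then have "{p \<in> space (borel \<Otimes>\<^sub>M PiM {..<n-1} (\<lambda>_. Exp \<mu>)). fst p \<le> h} \<inter>
        {p \<in> space (borel \<Otimes>\<^sub>M PiM {..<n-1} (\<lambda>_. Exp \<mu>)). num_departures m (n-1) (h - fst p) (snd p) = d}
        \<in> sets (borel \<Otimes>\<^sub>M PiM {..<n-1} (\<lambda>_. Exp \<mu>))"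
      using sets_pair_nd[OF m] by blast
    moreover have "{p \<in> space (borel \<Otimes>\<^sub>M PiM {..<n-1} (\<lambda>_. Exp \<mu>)). fst p \<le> h} \<inter>
        {p \<in> space (borel \<Otimes>\<^sub>M PiM {..<n-1} (\<lambda>_. Exp \<mu>)). num_departures m (n-1) (h - fst p) (snd p) = d}
        = {p \<in> space (borel \<Otimes>\<^sub>M PiM {..<n-1} (\<lambda>_. Exp \<mu>)). fst p \<le> h \<and> num_departures m (n-1) (h - fst p) (snd p) = d}"
      by blast
    ultimately have "(\<lambda>p. if fst p \<le> h \<and> num_departures m (n-1) (h - fst p) (snd p) = d then 1 else 0 :: ennreal)
        \<in> borel_measurable (borel \<Otimes>\<^sub>M PiM {..<n-1} (\<lambda>_. Exp \<mu>))"
      by (intro meas_If01) (simp only:)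
    then show "(\<lambda>(t, z). if t \<le> h \<and> num_departures m (n - 1) (h - t) z = d then 1 else 0 :: ennreal)
        \<in> borel_measurable (borel \<Otimes>\<^sub>M PiM {..<n-1} (\<lambda>_. Exp \<mu>))"
      by (simp add: split_beta')
  next
    fix a s assume a: "a < k" and s: "s \<in> space (PiM {..<n} (\<lambda>_. Exp \<mu>))" and nn: "\<forall>i<n. 0 \<le> s i"
      and amin: "\<forall>i<k. s a \<le> s i"
    show "indicator ?S s = (if s a \<le> h \<and> num_departures m (n - 1) (h - s a)
        (\<lambda>i\<in>{..<n-1}. s (skip a i) - (if i < k - 1 then s a else 0)) = d then 1 else 0)"
      using nd_shift_Phi[OF m k_def a nn amin, of h] s by (auto simp: indicator_def)
  qed
  finally show ?thesis unfolding k_def .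
qed


lemma inner_Rd:
  fixes n :: nat
  assumes m: "m \<ge> 1"
  shows "(\<integral>\<^sup>+z. (if y \<le> h \<and> num_departures m n (h - y) z = d then 1 else 0) \<partial>PiM {..<n} (\<lambda>_. Exp \<mu>))
       = (if y \<le> h then Rd \<mu> m n (h - y) d else 0)"
proof (cases "y \<le> h")
  case True
  have "(\<integral>\<^sup>+z. (if y \<le> h \<and> num_departures m n (h - y) z = d then 1 else 0) \<partial>PiM {..<n} (\<lambda>_. Exp \<mu>))
      = (\<integral>\<^sup>+z. indicator {s \<in> space (PiM {..<n} (\<lambda>_. Exp \<mu>)). num_departures m n (h - y) s = d} z \<partial>PiM {..<n} (\<lambda>_. Exp \<mu>))"
    using True by (intro nn_integral_cong) (auto simp: indicator_def)
  also have "\<dots> = Rd \<mu> m n (h - y) d"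
    unfolding Rd_def using sets_Rd[OF m] by simp
  finally show ?thesis using True by simp
qed simp

lemma meas_Rd_shift:
  fixes n :: nat
  assumes \<mu>: "\<mu> > 0" and m: "m \<ge> 1"
  shows "(\<lambda>y. if y \<le> h then Rd \<mu> m n (h - y) d else 0) \<in> borel_measurable borel"
proof -
  have "{p \<in> space (borel \<Otimes>\<^sub>M PiM {..<n} (\<lambda>_. Exp \<mu>)). fst p \<le> h} \<in> sets (borel \<Otimes>\<^sub>M PiM {..<n} (\<lambda>_. Exp \<mu>))"
    by measurable
  then have "{p \<in> space (borel \<Otimes>\<^sub>M PiM {..<n} (\<lambda>_. Exp \<mu>)). fst p \<le> h} \<inter>
      {p \<in> space (borel \<Otimes>\<^sub>M PiM {..<n} (\<lambda>_. Exp \<mu>)). num_departures m n (h - fst p) (snd p) = d}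
      \<in> sets (borel \<Otimes>\<^sub>M PiM {..<n} (\<lambda>_. Exp \<mu>))"
    using sets_pair_nd[OF m] by blast
  moreover have "{p \<in> space (borel \<Otimes>\<^sub>M PiM {..<n} (\<lambda>_. Exp \<mu>)). fst p \<le> h} \<inter>
      {p \<in> space (borel \<Otimes>\<^sub>M PiM {..<n} (\<lambda>_. Exp \<mu>)). num_departures m n (h - fst p) (snd p) = d}
      = {p \<in> space (borel \<Otimes>\<^sub>M PiM {..<n} (\<lambda>_. Exp \<mu>)). fst p \<le> h \<and> num_departures m n (h - fst p) (snd p) = d}"
    by blast
  ultimately have "(\<lambda>p. if fst p \<le> h \<and> num_departures m n (h - fst p) (snd p) = d then 1 else 0 :: ennreal)
      \<in> borel_measurable (borel \<Otimes>\<^sub>M PiM {..<n} (\<lambda>_. Exp \<mu>))"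
    by (intro meas_If01) (simp only:)
  then have "(\<lambda>(t, z). if t \<le> h \<and> num_departures m n (h - t) z = d then 1 else 0 :: ennreal)
      \<in> borel_measurable (borel \<Otimes>\<^sub>M PiM {..<n} (\<lambda>_. Exp \<mu>))"
    by (simp add: split_beta')
  then have "(\<lambda>y. \<integral>\<^sup>+z. (if y \<le> h \<and> num_departures m n (h - y) z = d then 1 else 0) \<partial>PiM {..<n} (\<lambda>_. Exp \<mu>)) \<in> borel_measurable borel"
  proof -
    have sf: "sigma_finite_measure (PiM {..<n} (\<lambda>_. Exp \<mu>))"
      by (rule prob_space_imp_sigma_finite, rule prob_space_PiM) (simp add: prob_space_Exp[OF \<mu>])
    show ?thesis using sigma_finite_measure.borel_measurable_nn_integral[OF sf, of
      "\<lambda>y z. (if y \<le> h \<and> num_departures m n (h - y) z = d then 1 else 0 :: ennreal)" borel] \<open>(\<lambda>(t, z). _) \<in> _\<close>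
      by simp
  qed
  then show ?thesis unfolding inner_Rd[OF m] .
qed

lemma rec_Rd_Suc':
  fixes n :: nat
  assumes \<mu>: "\<mu> > 0" and m: "m \<ge> 1" and n: "n \<ge> 1"
  shows "Rd \<mu> m n h (Suc d) = (\<Sum>a<min n m. \<integral>\<^sup>+y. ennreal (exp (- (\<mu> * y))) ^ (min n m - 1) *
      (if y \<le> h then Rd \<mu> m (n-1) (h - y) d else 0) \<partial>Exp \<mu>)"
  unfolding rec_Rd_Suc[OF \<mu> m n] inner_Rd[OF m] ..


definition jj :: "nat \<Rightarrow> nat \<Rightarrow> nat" where "jj a j = (if j < a then j else j - 1)"

lemma jj_props:
  assumes "j \<noteq> a" "j < k" "a < k"
  shows "skip a (jj a j) = j" "jj a j < k - 1"
  using assms by (auto simp: jj_def skip_def)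

lemma rec_Rj_Suc:
  fixes n :: nat
  assumes \<mu>: "\<mu> > 0" and m: "m \<ge> 1" and n: "n \<ge> 1" and j: "j < min n m"
  shows "Rj \<mu> m n j h (Suc d) = (\<Sum>a<min n m. \<integral>\<^sup>+y. ennreal (exp (- (\<mu> * y))) ^ (min n m - 1) *
      (if a = j then 0 else if y \<le> h then Rj \<mu> m (n-1) (jj a j) (h - y) d else 0) \<partial>Exp \<mu>)"
proof -
  define k where "k = min n m"
  have k: "1 \<le> k" "k \<le> n" using m n by (auto simp: k_def)
  have jk: "j < k" using j by (simp add: k_def)
  define G where "G a t z = (if a \<noteq> j \<and> t \<le> h \<and> h - t < z (jj a j) \<and> num_departures m (n - 1) (h - t) z = d then 1 else 0 :: ennreal)" for a t z
  let ?S = "{s \<in> space (PiM {..<n} (\<lambda>_. Exp \<mu>)). h < s j \<and> num_departures m n h s = Suc d}"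
  have S: "?S \<in> sets (PiM {..<n} (\<lambda>_. Exp \<mu>))" by (rule sets_Rj[OF m]) (use jk k in simp)
  have "Rj \<mu> m n j h (Suc d) = (\<integral>\<^sup>+s. indicator ?S s \<partial>PiM {..<n} (\<lambda>_. Exp \<mu>))"
    unfolding Rj_def using S by simp
  also have "\<dots> = (\<Sum>a<k. \<integral>\<^sup>+y. ennreal (exp (- (\<mu> * y))) ^ (k - 1) *
      (\<integral>\<^sup>+z. G a y z \<partial>PiM {..<n-1} (\<lambda>_. Exp \<mu>)) \<partial>Exp \<mu>)"
  proof (rule recur[OF \<mu> k])
    show "indicator ?S \<in> borel_measurable (PiM {..<n} (\<lambda>_. Exp \<mu>))" using S by simp
  next
    fix a :: nat assume a: "a < k"
    show "(\<lambda>(t, z). G a t z) \<in> borel_measurable (borel \<Otimes>\<^sub>M PiM {..<n-1} (\<lambda>_. Exp \<mu>))"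
    proof (cases "a = j")
      case True
      then show ?thesis by (simp add: G_def)
    next
      case False
      have jjn: "jj a j \<in> {..<n-1}" using jj_props(2)[OF False[symmetric] jk a] k by simp
      let ?P = "borel \<Otimes>\<^sub>M PiM {..<n-1} (\<lambda>_. Exp \<mu>)"
      have s1: "{p \<in> space ?P. fst p \<le> h} \<in> sets ?P" by measurable
      have s2: "{p \<in> space ?P. h - fst p < snd p (jj a j)} \<in> sets ?P"
        by (rule borel_measurable_less[OF _ snd_comp[OF jjn]]) measurable
      have s3: "{p \<in> space ?P. num_departures m (n-1) (h - fst p) (snd p) = d} \<in> sets ?P"
        by (rule sets_pair_nd[OF m])
      have "{p \<in> space ?P. fst p \<le> h} \<inter> {p \<in> space ?P. h - fst p < snd p (jj a j)} \<inter>
           {p \<in> space ?P. num_departures m (n-1) (h - fst p) (snd p) = d} \<in> sets ?P"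
        using s1 s2 s3 by blast
      moreover have "{p \<in> space ?P. fst p \<le> h} \<inter> {p \<in> space ?P. h - fst p < snd p (jj a j)} \<inter>
           {p \<in> space ?P. num_departures m (n-1) (h - fst p) (snd p) = d} =
           {p \<in> space ?P. fst p \<le> h \<and> h - fst p < snd p (jj a j) \<and> num_departures m (n-1) (h - fst p) (snd p) = d}"
        by auto
      ultimately have "(\<lambda>p. if fst p \<le> h \<and> h - fst p < snd p (jj a j) \<and> num_departures m (n-1) (h - fst p) (snd p) = d then 1 else 0 :: ennreal)
          \<in> borel_measurable ?P"
        by (intro meas_If01) (simp only:)
      moreover have "(\<lambda>(t, z). G a t z) = (\<lambda>p. if fst p \<le> h \<and> h - fst p < snd p (jj a j) \<and> num_departures m (n-1) (h - fst p) (snd p) = d then 1 else 0 :: ennreal)"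
        using False by (simp add: fun_eq_iff G_def split_beta')
      ultimately show ?thesis by (simp only:)
    qed
  next
    fix a s assume a: "a < k" and s: "s \<in> space (PiM {..<n} (\<lambda>_. Exp \<mu>))" and nn: "\<forall>i<n. 0 \<le> s i"
      and amin: "\<forall>i<k. s a \<le> s i"
    let ?Phi = "\<lambda>i\<in>{..<n-1}. s (skip a i) - (if i < k - 1 then s a else 0)"
    have nd: "num_departures m n h s = (if s a \<le> h then Suc (num_departures m (n - 1) (h - s a) ?Phi) else 0)"
      by (rule nd_shift_Phi[OF m k_def a nn amin])
    show "indicator ?S s = G a (s a) ?Phi"
    proof (cases "a = j")
      case True
      then show ?thesis using nd s by (auto simp: indicator_def G_def)
    next
      case False
      have jp: "skip a (jj a j) = j" "jj a j < k - 1" using jj_props[OF False[symmetric] jk a] by auto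
      then have "jj a j < n - 1" using k by simp
      then have "?Phi (jj a j) = s j - s a" using jp by simp
      then have "(h < s j) = (h - s a < ?Phi (jj a j))" by simp
      then show ?thesis using nd s False unfolding G_def by (auto simp: indicator_def)
    qed
  qed
  also have "\<dots> = (\<Sum>a<k. \<integral>\<^sup>+y. ennreal (exp (- (\<mu> * y))) ^ (k - 1) *
      (if a = j then 0 else if y \<le> h then Rj \<mu> m (n-1) (jj a j) (h - y) d else 0) \<partial>Exp \<mu>)"
  proof (intro sum.cong refl nn_integral_cong arg_cong2[where f="(*)"])
    fix a y assume a: "a \<in> {..<k}"
    show "(\<integral>\<^sup>+z. G a y z \<partial>PiM {..<n-1} (\<lambda>_. Exp \<mu>)) = (if a = j then 0 else if y \<le> h then Rj \<mu> m (n-1) (jj a j) (h - y) d else 0)"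
    proof (cases "a = j \<or> \<not> y \<le> h")
      case True
      then show ?thesis by (auto simp: G_def)
    next
      case False
      then have aj: "a \<noteq> j" and yh: "y \<le> h" by auto
      have jjn: "jj a j < n - 1" using jj_props(2)[OF aj[symmetric] jk] a k by simp
      have "(\<integral>\<^sup>+z. G a y z \<partial>PiM {..<n-1} (\<lambda>_. Exp \<mu>)) =
          (\<integral>\<^sup>+z. indicator {s \<in> space (PiM {..<n-1} (\<lambda>_. Exp \<mu>)). h - y < s (jj a j) \<and> num_departures m (n-1) (h - y) s = d} z \<partial>PiM {..<n-1} (\<lambda>_. Exp \<mu>))"
        using aj yh by (intro nn_integral_cong) (auto simp: G_def indicator_def)
      also have "\<dots> = Rj \<mu> m (n-1) (jj a j) (h - y) d"
        unfolding Rj_def using sets_Rj[OF m jjn] by simp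
      finally show ?thesis using aj yh by simp
    qed
  qed
  finally show ?thesis unfolding k_def .
qed


lemma rec_Rd_0:
  fixes n :: nat
  assumes \<mu>: "\<mu> > 0" and m: "m \<ge> 1" and n: "n \<ge> 1"
  shows "Rd \<mu> m n h 0 = (\<Sum>a<min n m. \<integral>\<^sup>+y. ennreal (exp (- (\<mu> * y))) ^ (min n m - 1) *
      (if h < y then 1 else 0) \<partial>Exp \<mu>)"
proof -
  define k where "k = min n m"
  have k: "1 \<le> k" "k \<le> n" using m n by (auto simp: k_def)
  let ?S = "{s \<in> space (PiM {..<n} (\<lambda>_. Exp \<mu>)). num_departures m n h s = 0}"
  have S: "?S \<in> sets (PiM {..<n} (\<lambda>_. Exp \<mu>))" by (rule sets_Rd[OF m])
  interpret Q: prob_space "PiM {..<n-1} (\<lambda>_. Exp \<mu>)"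
    by (rule prob_space_PiM) (simp add: prob_space_Exp[OF \<mu>])
  have "Rd \<mu> m n h 0 = (\<integral>\<^sup>+s. indicator ?S s \<partial>PiM {..<n} (\<lambda>_. Exp \<mu>))"
    unfolding Rd_def using S by simp
  also have "\<dots> = (\<Sum>a<k. \<integral>\<^sup>+y. ennreal (exp (- (\<mu> * y))) ^ (k - 1) *
      (\<integral>\<^sup>+z. (if h < y then 1 else 0) \<partial>PiM {..<n-1} (\<lambda>_. Exp \<mu>)) \<partial>Exp \<mu>)"
  proof (rule recur[OF \<mu> k])
    show "indicator ?S \<in> borel_measurable (PiM {..<n} (\<lambda>_. Exp \<mu>))" using S by simp
  next
    fix a :: nat
    have "{p \<in> space (borel \<Otimes>\<^sub>M PiM {..<n-1} (\<lambda>_. Exp \<mu>)). h < fst p} \<in> sets (borel \<Otimes>\<^sub>M PiM {..<n-1} (\<lambda>_. Exp \<mu>))"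
      by measurable
    then have "(\<lambda>p. if h < fst p then 1 else 0 :: ennreal) \<in> borel_measurable (borel \<Otimes>\<^sub>M PiM {..<n-1} (\<lambda>_. Exp \<mu>))"
      by (rule meas_If01)
    then show "(\<lambda>(t, z). if h < t then 1 else 0 :: ennreal) \<in> borel_measurable (borel \<Otimes>\<^sub>M PiM {..<n-1} (\<lambda>_. Exp \<mu>))"
      by (simp add: split_beta')
  next
    fix a s assume a: "a < k" and s: "s \<in> space (PiM {..<n} (\<lambda>_. Exp \<mu>))" and nn: "\<forall>i<n. 0 \<le> s i"
      and amin: "\<forall>i<k. s a \<le> s i"
    show "indicator ?S s = (if h < s a then 1 else 0)"
      using nd_shift_Phi[OF m k_def a nn amin, of h] s by (auto simp: indicator_def)
  qed
  also have "\<dots> = (\<Sum>a<k. \<integral>\<^sup>+y. ennreal (exp (- (\<mu> * y))) ^ (k - 1) * (if h < y then 1 else 0) \<partial>Exp \<mu>)"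
    by (intro sum.cong refl nn_integral_cong) (simp add: Q.emeasure_space_1[simplified])
  finally show ?thesis unfolding k_def .
qed

lemma Rj_0:
  fixes n :: nat
  assumes m: "m \<ge> 1" and j: "j < min n m"
  shows "Rj \<mu> m n j h 0 = Rd \<mu> m n h 0"
proof -
  have "\<And>s. num_departures m n h s = 0 \<Longrightarrow> h < s j"
  proof -
    fix s assume "num_departures m n h s = 0"
    then have "{i. i < n \<and> departure m s i \<le> h} = {}"
      unfolding num_departures_def by (subst (asm) card_0_eq) auto
    then have "\<not> departure m s j \<le> h" using j by auto
    moreover have "departure m s j = s j" using j by (subst departure.simps) simp
    ultimately show "h < s j" by simp
  qed
  then show ?thesis unfolding Rj_def Rd_def by (intro arg_cong2[where f=emeasure] refl) blast
qed


lemma epos[simp]: "0 < ennreal (exp t) ^ n"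
proof -
  have e: "ennreal (exp t) ^ n = ennreal (exp t ^ n)" by (rule ennreal_power) simp
  show ?thesis by (simp only: e ennreal_less_zero_iff) simp
qed

lemma posint:
  assumes \<mu>: "\<mu> > 0" and ab: "0 \<le> a" "a < b" and f: "f \<in> borel_measurable borel"
    and pos: "\<And>y. a < y \<Longrightarrow> y < b \<Longrightarrow> 0 < f y"
  shows "0 < (\<integral>\<^sup>+y. f y \<partial>Exp \<mu>)"
proof (rule ccontr)
  assume "\<not> 0 < (\<integral>\<^sup>+y. f y \<partial>Exp \<mu>)"
  then have "(\<integral>\<^sup>+y. f y \<partial>Exp \<mu>) = 0" by (simp add: not_less)
  moreover have fE: "f \<in> borel_measurable (Exp \<mu>)" using f by (simp only: measurable_cong_sets[OF sets_Exp refl])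
  ultimately have "AE y in Exp \<mu>. f y = 0" by (simp add: nn_integral_0_iff_AE)
  then have "AE y in lborel. 0 < ennreal (exponential_density \<mu> y) \<longrightarrow> f y = 0"
    unfolding Exp_def by (subst (asm) AE_density) auto
  then have "AE y in lborel. y \<notin> {a<..<b}"
  proof (rule AE_mp, intro AE_I2 impI)
    fix y assume H: "0 < ennreal (exponential_density \<mu> y) \<longrightarrow> f y = 0"
    show "y \<notin> {a<..<b}"
    proof
      assume y: "y \<in> {a<..<b}"
      then have "0 < exponential_density \<mu> y" using ab \<mu> by (auto simp: exponential_density_def)
      then have "f y = 0" using H by simp
      then show False using pos[of y] y by simp
    qed
  qed
  then have "emeasure lborel {a<..<b} = 0"
    by (subst (asm) AE_iff_measurable[of "{a<..<b}"]) auto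
  then show False using ab by simp
qed

lemma Rd_zero_space:
  assumes \<mu>: "\<mu> > 0"
  shows "Rd \<mu> m 0 h 0 = 1"
proof -
  interpret Q: prob_space "PiM {..<0::nat} (\<lambda>_. Exp \<mu>)"
    by (rule prob_space_PiM) (simp add: prob_space_Exp[OF \<mu>])
  have "{s \<in> space (PiM {..<0::nat} (\<lambda>_. Exp \<mu>)). num_departures m 0 h s = 0} = space (PiM {..<0::nat} (\<lambda>_. Exp \<mu>))"
    by (auto simp: num_departures_def)
  then show ?thesis unfolding Rd_def using Q.emeasure_space_1 by simp
qed

lemma sum_const_ennreal: "(\<Sum>a<k. (c::ennreal)) = of_nat k * c"
  by simp

lemma Rd_pos:
  assumes \<mu>: "\<mu> > 0" and m: "m \<ge> 1"
  shows "\<forall>h>0. \<forall>d\<le>n. 0 < Rd \<mu> m n h d"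
proof (induction n)
  case 0
  then show ?case using Rd_zero_space[OF \<mu>] by simp
next
  case (Suc n)
  define k where "k = min (Suc n) m"
  have k: "1 \<le> k" using m by (simp add: k_def)
  show ?case
  proof (intro allI impI)
    fix h :: real and d :: nat assume h: "h > 0" and d: "d \<le> Suc n"
    show "0 < Rd \<mu> m (Suc n) h d"
    proof (cases d)
      case 0
      let ?X = "\<integral>\<^sup>+y. ennreal (exp (- (\<mu> * y))) ^ (k - 1) * (if h < y then 1 else 0) \<partial>Exp \<mu>"
      have "Rd \<mu> m (Suc n) h d = of_nat k * ?X"
        using rec_Rd_0[OF \<mu> m, of "Suc n" h] 0 by (simp add: k_def)
      moreover have "0 < ?X"
      proof (rule posint[OF \<mu>, of h "h + 1"])
        show "(\<lambda>y. ennreal (exp (- (\<mu> * y))) ^ (k - 1) * (if h < y then 1 else 0)) \<in> borel_measurable borel"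
          by measurable
        fix y assume "h < y" "y < h + 1"
        then show "0 < ennreal (exp (- (\<mu> * y))) ^ (k - 1) * (if h < y then 1 else 0)"
          by simp
      qed (use h in auto)
      ultimately show ?thesis using k by (simp add: ennreal_zero_less_mult_iff)
    next
      case (Suc d')
      let ?X = "\<integral>\<^sup>+y. ennreal (exp (- (\<mu> * y))) ^ (k - 1) * (if y \<le> h then Rd \<mu> m n (h - y) d' else 0) \<partial>Exp \<mu>"
      have "Rd \<mu> m (Suc n) h d = of_nat k * ?X"
        using rec_Rd_Suc'[OF \<mu> m, of "Suc n" h d', unfolded diff_Suc_1] Suc by (simp add: k_def)
      moreover have "0 < ?X"
      proof (rule posint[OF \<mu>, of 0 h])
        show "(\<lambda>y. ennreal (exp (- (\<mu> * y))) ^ (k - 1) * (if y \<le> h then Rd \<mu> m n (h - y) d' else 0)) \<in> borel_measurable borel"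
          using meas_Rd_shift[OF \<mu> m, of h n d'] by measurable
        fix y assume y: "0 < y" "y < h"
        then have "0 < Rd \<mu> m n (h - y) d'" using Suc.IH Suc d by simp
        then show "0 < ennreal (exp (- (\<mu> * y))) ^ (k - 1) * (if y \<le> h then Rd \<mu> m n (h - y) d' else 0)"
          using y by (simp add: ennreal_zero_less_mult_iff)
      qed (use h in auto)
      ultimately show ?thesis using k by (simp add: ennreal_zero_less_mult_iff)
    qed
  qed
qed


definition cc :: "nat \<Rightarrow> nat \<Rightarrow> nat \<Rightarrow> real" where
  "cc m n d = (if n \<le> m then (real n - real d) / real n
     else if d \<le> n - m then ((real m - 1) / real m) ^ d
     else ((real m - 1) / real m) ^ (n - m) * ((real n - real d) / real m))"

lemma cc_0: "n \<ge> 1 \<Longrightarrow> cc m n 0 = 1"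
  by (simp add: cc_def)

lemma cc_nonneg: "m \<ge> 1 \<Longrightarrow> d \<le> n \<Longrightarrow> 0 \<le> cc m n d"
  by (auto simp: cc_def)

lemma cc_k1:
  assumes "m \<ge> 1" "n \<ge> 1" "min n m = 1" "Suc d \<le> n"
  shows "cc m n (Suc d) = 0"
proof (cases "n \<le> m")
  case True
  then have "n = 1" using assms by simp
  then show ?thesis using assms by (simp add: cc_def)
next
  case False
  then have m1: "m = 1" using assms by simp
  have "n - 1 \<ge> 1" using False m1 by simp
  then show ?thesis using False m1 by (auto simp: cc_def)
qed

lemma cc_rec:
  assumes m: "m \<ge> 1" and k: "k = min n m" "k \<ge> 2" and d: "Suc d \<le> n"
  shows "cc m n (Suc d) = (real k - 1) / real k * cc m (n - 1) d"
proof (cases "n \<le> m")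
  case True
  then have kn: "k = n" using k by simp
  have "n - 1 \<le> m" using True by simp
  then have "cc m (n - 1) d = (real (n - 1) - real d) / real (n - 1)" by (simp add: cc_def)
  moreover have "real (n - 1) = real n - 1" using k kn by simp
  ultimately show ?thesis using True kn k d by (simp add: cc_def field_simps)
next
  case False
  then have km: "k = m" using k by simp
  have mpos: "real m > 0" using m by simp
  show ?thesis
  proof (cases "n - 1 \<le> m")
    case True
    then have nm: "n = m + 1" using False by simp
    have c1: "cc m (n - 1) d = (real m - real d) / real m" using nm by (simp add: cc_def)
    show ?thesis
    proof (cases "Suc d \<le> n - m")
      case True
      then have "d = 0" using nm by simp
      then show ?thesis using nm c1 km mpos by (simp add: cc_def)
    next
      case False
      then show ?thesis using nm c1 km mpos by (simp add: cc_def field_simps)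
    qed
  next
    case False2: False
    have e: "n - 1 - m = n - m - 1" by simp
    have nm1: "n - m \<ge> 2" using False2 by simp
    show ?thesis
    proof (cases "Suc d \<le> n - m")
      case True
      then have "d \<le> n - 1 - m" using nm1 by arith
      then have "cc m (n - 1) d = ((real m - 1) / real m) ^ d" using False2 by (simp add: cc_def)
      then show ?thesis using True False km by (simp add: cc_def)
    next
      case False3: False
      then have "\<not> d \<le> n - 1 - m" using nm1 by arith
      then have "cc m (n - 1) d = ((real m - 1) / real m) ^ (n - 1 - m) * ((real (n - 1) - real d) / real m)"
        using False2 by (simp add: cc_def)
      moreover have "real (n - 1) = real n - 1" using d by simp
      moreover have "((real m - 1) / real m) ^ (n - m) = (real m - 1) / real m * ((real m - 1) / real m) ^ (n - 1 - m)"
      proof -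
        have "n - m = Suc (n - 1 - m)" using nm1 by simp
        then show ?thesis by simp
      qed
      ultimately have c1: "cc m (n - 1) d = ((real m - 1) / real m) ^ (n - 1 - m) * ((real n - 1 - real d) / real m)"
        and pw: "((real m - 1) / real m) ^ (n - m) = (real m - 1) / real m * ((real m - 1) / real m) ^ (n - 1 - m)"
        by simp_all
      have "cc m n (Suc d) = ((real m - 1) / real m) ^ (n - m) * ((real n - real (Suc d)) / real m)"
        using False3 False by (simp add: cc_def)
      also have "\<dots> = (real m - 1) / real m * (((real m - 1) / real m) ^ (n - 1 - m) * ((real n - 1 - real d) / real m))"
        unfolding pw by simp
      finally show ?thesis using c1 km by simp
    qed
  qed
qed


lemma Rd_big:
  assumes "n < d"
  shows "Rd \<mu> m n h d = 0" "Rj \<mu> m n j h d = 0"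
proof -
  have "\<And>s. num_departures m n h s \<noteq> d" using nd_le[of m n h] assms by (metis leD)
  then show "Rd \<mu> m n h d = 0" "Rj \<mu> m n j h d = 0" unfolding Rd_def Rj_def by simp_all
qed

lemma sum_skip_j:
  assumes "j < k"
  shows "(\<Sum>a<k. if a = j then 0 else (Z::ennreal)) = of_nat (k - 1) * Z"
proof -
  have "(\<Sum>a<k. if a = j then 0 else Z) = (\<Sum>a\<in>{..<k} - {j}. Z)"
    by (rule sum.mono_neutral_cong_right) auto
  also have "\<dots> = of_nat (k - 1) * Z" using assms by simp
  finally show ?thesis .
qed

lemma main_rec:
  assumes \<mu>: "\<mu> > 0" and m: "m \<ge> 1"
  shows "n \<ge> 1 \<Longrightarrow> \<forall>j h d. j < min n m \<longrightarrow> Rj \<mu> m n j h d = ennreal (cc m n d) * Rd \<mu> m n h d"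
proof (induction n)
  case 0
  then show ?case by simp
next
  case (Suc n)
  define k where "k = min (Suc n) m"
  show ?case
  proof (intro allI impI)
    fix j h d assume j: "j < min (Suc n) m"
    show "Rj \<mu> m (Suc n) j h d = ennreal (cc m (Suc n) d) * Rd \<mu> m (Suc n) h d"
    proof (cases d)
      case 0
      then show ?thesis using Rj_0[OF m j] cc_0[of "Suc n" m] by simp
    next
      case (Suc d')
      show ?thesis
      proof (cases "Suc n < d")
        case True
        then show ?thesis using Rd_big[OF True] by simp
      next
        case False
        then have dn: "Suc d' \<le> Suc n" using Suc by simp
        let ?X = "\<integral>\<^sup>+y. ennreal (exp (- (\<mu> * y))) ^ (k - 1) * (if y \<le> h then Rd \<mu> m n (h - y) d' else 0) \<partial>Exp \<mu>"
        have Rd_eq: "Rd \<mu> m (Suc n) h d = of_nat k * ?X"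
          using rec_Rd_Suc'[OF \<mu> m, of "Suc n" h d', unfolded diff_Suc_1] Suc by (simp add: k_def)
        have Rj_eq: "Rj \<mu> m (Suc n) j h d = (\<Sum>a<k. \<integral>\<^sup>+y. ennreal (exp (- (\<mu> * y))) ^ (k - 1) *
            (if a = j then 0 else if y \<le> h then Rj \<mu> m n (jj a j) (h - y) d' else 0) \<partial>Exp \<mu>)"
          using rec_Rj_Suc[OF \<mu> m _ j, of h d', unfolded diff_Suc_1] Suc by (simp add: k_def)
        show ?thesis
        proof (cases "k = 1")
          case True
          then have j0: "j = 0" using j k_def by simp
          have "Rj \<mu> m (Suc n) j h d = 0" using Rj_eq True j0 by simp
          moreover have "cc m (Suc n) d = 0" using cc_k1[OF m _ _ dn] True Suc by (simp add: k_def)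
          ultimately show ?thesis by simp
        next
          case False
          have "k \<ge> 1" using m by (simp add: k_def)
          then have k2: "k \<ge> 2" using False by simp
          then have n1: "n \<ge> 1" by (simp add: k_def)
          have jk: "j < k" using j by (simp add: k_def)
          have IH: "\<And>j' h'. j' < min n m \<Longrightarrow> Rj \<mu> m n j' h' d' = ennreal (cc m n d') * Rd \<mu> m n h' d'"
            using Suc.IH[OF n1] by blast
          have cnn: "0 \<le> cc m n d'" using cc_nonneg[OF m] dn by simp
          have mX: "(\<lambda>y. ennreal (exp (- (\<mu> * y))) ^ (k - 1) * (if y \<le> h then Rd \<mu> m n (h - y) d' else 0)) \<in> borel_measurable (Exp \<mu>)"
          proof -
            have "(\<lambda>y. ennreal (exp (- (\<mu> * y))) ^ (k - 1) * (if y \<le> h then Rd \<mu> m n (h - y) d' else 0)) \<in> borel_measurable borel"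
              using meas_Rd_shift[OF \<mu> m, of h n d'] by measurable
            then show ?thesis by (simp only: measurable_cong_sets[OF sets_Exp refl])
          qed
          have "Rj \<mu> m (Suc n) j h d = (\<Sum>a<k. if a = j then 0 else ennreal (cc m n d') * ?X)"
            unfolding Rj_eq
          proof (intro sum.cong refl)
            fix a assume a: "a \<in> {..<k}"
            show "(\<integral>\<^sup>+y. ennreal (exp (- (\<mu> * y))) ^ (k - 1) *
                (if a = j then 0 else if y \<le> h then Rj \<mu> m n (jj a j) (h - y) d' else 0) \<partial>Exp \<mu>) =
                (if a = j then 0 else ennreal (cc m n d') * ?X)"
            proof (cases "a = j")
              case True then show ?thesis by simp
            next
              case False
              have jjn: "jj a j < min n m"
                using jj_props(2)[OF False[symmetric] jk] a unfolding k_def by (simp add: min_def split: if_splits; arith)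
              have "(\<integral>\<^sup>+y. ennreal (exp (- (\<mu> * y))) ^ (k - 1) *
                  (if a = j then 0 else if y \<le> h then Rj \<mu> m n (jj a j) (h - y) d' else 0) \<partial>Exp \<mu>) =
                  (\<integral>\<^sup>+y. ennreal (cc m n d') * (ennreal (exp (- (\<mu> * y))) ^ (k - 1) * (if y \<le> h then Rd \<mu> m n (h - y) d' else 0)) \<partial>Exp \<mu>)"
                using False IH[OF jjn] by (intro nn_integral_cong) (simp add: mult.left_commute)
              also have "\<dots> = ennreal (cc m n d') * ?X"
                by (rule nn_integral_cmult[OF mX])
              finally show ?thesis using False by simp
            qed
          qed
          also have "\<dots> = of_nat (k - 1) * (ennreal (cc m n d') * ?X)"
            by (rule sum_skip_j[OF jk])
          also have "\<dots> = ennreal (cc m (Suc n) d) * (of_nat k * ?X)"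
          proof -
            have cr: "cc m (Suc n) d = (real k - 1) / real k * cc m n d'"
              using cc_rec[OF m k_def k2, of d'] dn Suc by simp
            have "cc m (Suc n) d * real k = real (k - 1) * cc m n d'"
              using cr k2 by (simp add: of_nat_diff)
            then have "ennreal (cc m (Suc n) d) * of_nat k = of_nat (k - 1) * ennreal (cc m n d')"
              using cnn cr k2
              by (metis ennreal_mult'' ennreal_of_nat_eq_real_of_nat of_nat_0_le_iff)
            then show ?thesis by (simp add: mult.assoc[symmetric])
          qed
          finally show ?thesis using Rd_eq by simp
        qed
      qed
    qed
  qed
qed


theorem lemma3:
  fixes M :: "'a measure" and S :: "nat \<Rightarrow> 'a \<Rightarrow> real"
    and m x j d :: nat and \<mu> h :: real
  assumes "prob_space M"
    and "m \<ge> 1" and "\<mu> > 0" and "x \<ge> 1" and "h > 0"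
    and "prob_space.indep_vars M (\<lambda>_. borel) S {..<x}"
    and "\<And>i. i < x \<Longrightarrow> distributed M lborel (S i) (exponential_density \<mu>)"
    and "j < min x m"
    and "d \<le> x"
  shows "let P = cond_prob M (\<lambda>\<omega>. h < S j \<omega>)
                    (\<lambda>\<omega>. num_departures m x h (\<lambda>i. S i \<omega>) = d)
         in (x \<le> m \<longrightarrow> P = (real x - real d) / real x)
          \<and> (x \<ge> m + 1 \<longrightarrow>
               (d \<le> x - m \<longrightarrow> P = ((real m - 1) / real m) ^ d)
             \<and> (x - m \<le> d \<longrightarrow> P = ((real m - 1) / real m) ^ (x - m) * ((real x - real d) / real m)))"
proof -
  note PS = assms(1) and m = assms(2) and \<mu> = assms(3) and x = assms(4) and h = assms(5)
    and ind = assms(6) and dist = assms(7) and j = assms(8) and d = assms(9)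
  interpret prob_space M by (rule PS)
  define Q where "Q = PiM {..<x} (\<lambda>_. Exp \<mu>)"
  define X where "X \<omega> = (\<lambda>i\<in>{..<x}. S i \<omega>)" for \<omega>
  interpret Q: prob_space Q unfolding Q_def
    by (rule prob_space_PiM) (simp add: prob_space_Exp[OF \<mu>])
  have rvl: "\<And>i. i < x \<Longrightarrow> S i \<in> measurable M lborel"
    using dist by (rule distributed_measurable)
  have rv: "\<And>i. i \<in> {..<x} \<Longrightarrow> random_variable borel (S i)"
    using rvl by (simp add: measurable_cong_sets[OF refl sets_lborel])
  have dE: "\<And>i. i \<in> {..<x} \<Longrightarrow> distr M borel (S i) = Exp \<mu>"
  proof -
    fix i assume i: "i \<in> {..<x}"
    have "distr M borel (S i) = distr M lborel (S i)" by (rule distr_cong) auto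
    also have "\<dots> = density lborel (\<lambda>x. ennreal (exponential_density \<mu> x))"
      using distributed_distr_eq_density[OF dist[of i]] i by simp
    finally show "distr M borel (S i) = Exp \<mu>" by (simp add: Exp_def)
  qed
  have "distr M (PiM {..<x} (\<lambda>_. borel)) X = PiM {..<x} (\<lambda>i. distr M borel (S i))"
  proof -
    have ne: "{..<x} \<noteq> {}" using x by (metis lessThan_iff less_one not_le not_less0 equals0D le_less_trans zero_less_one) 
    show ?thesis unfolding X_def using indep_vars_iff_distr_eq_PiM'[where I="{..<x}" and M'="\<lambda>_. borel" and X=S, OF ne] rv ind by auto
  qed
  also have "\<dots> = Q" unfolding Q_def by (rule PiM_cong) (auto simp: dE)
  finally have DQ: "distr M (PiM {..<x} (\<lambda>_. borel)) X = Q" .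
  have Xm: "X \<in> measurable M (PiM {..<x} (\<lambda>_. borel))"
    unfolding X_def by (rule measurable_restrict) (use rv in auto)
  have setsQ: "sets (PiM {..<x} (\<lambda>_. borel)) = sets Q"
    unfolding Q_def by (rule sets_PiM_cong) auto
  have spQ: "\<And>\<omega>. X \<omega> \<in> space Q" unfolding Q_def X_def by (auto simp: space_PiM)
  have nd: "\<And>\<omega>. num_departures m x h (\<lambda>i. S i \<omega>) = num_departures m x h (X \<omega>)"
    by (rule nd_local) (simp add: X_def)
  have jx: "j < x" using j by simp
  have Xj: "\<And>\<omega>. X \<omega> j = S j \<omega>" using jx by (simp add: X_def)
  have transfer: "\<And>A. A \<in> sets Q \<Longrightarrow> measure M (X -` A \<inter> space M) = measure Q A"
    using measure_distr[OF Xm] DQ setsQ by metis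
  let ?Ad = "{s \<in> space Q. num_departures m x h s = d}"
  let ?Aj = "{s \<in> space Q. h < s j \<and> num_departures m x h s = d}"
  have Ad: "?Ad \<in> sets Q" unfolding Q_def by (rule sets_Rd[OF m])
  have Aj: "?Aj \<in> sets Q" unfolding Q_def by (rule sets_Rj[OF m jx])
  have p1: "measure M {\<omega> \<in> space M. num_departures m x h (\<lambda>i. S i \<omega>) = d} = measure Q ?Ad"
  proof -
    have "X -` ?Ad \<inter> space M = {\<omega> \<in> space M. num_departures m x h (\<lambda>i. S i \<omega>) = d}"
      using spQ nd by auto
    then show ?thesis using transfer[OF Ad] by simp
  qed
  have p2: "measure M {\<omega> \<in> space M. h < S j \<omega> \<and> num_departures m x h (\<lambda>i. S i \<omega>) = d} = measure Q ?Aj"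
  proof -
    have "X -` ?Aj \<inter> space M = {\<omega> \<in> space M. h < S j \<omega> \<and> num_departures m x h (\<lambda>i. S i \<omega>) = d}"
      using spQ nd Xj by auto
    then show ?thesis using transfer[OF Aj] by simp
  qed
  have Rd_eq: "Rd \<mu> m x h d = ennreal (measure Q ?Ad)"
    unfolding Rd_def Q_def[symmetric] by (rule Q.emeasure_eq_measure)
  have Rj_eq: "Rj \<mu> m x j h d = ennreal (measure Q ?Aj)"
    unfolding Rj_def Q_def[symmetric] by (rule Q.emeasure_eq_measure)
  have pos: "0 < measure Q ?Ad"
  proof -
    have "0 < Rd \<mu> m x h d" using Rd_pos[OF \<mu> m, of x] h d by blast
    then have "0 < ennreal (measure Q ?Ad)" using Rd_eq by simp
    then show ?thesis by (simp only: ennreal_less_zero_iff)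
  qed
  have cnn: "0 \<le> cc m x d" by (rule cc_nonneg[OF m d])
  have "ennreal (measure Q ?Aj) = ennreal (cc m x d) * ennreal (measure Q ?Ad)"
    using main_rec[OF \<mu> m x] j Rd_eq Rj_eq by simp
  also have "\<dots> = ennreal (cc m x d * measure Q ?Ad)" using cnn by (simp add: ennreal_mult)
  finally have "measure Q ?Aj = cc m x d * measure Q ?Ad"
    using cnn pos by (subst (asm) ennreal_inj) auto
  then have CP: "cond_prob M (\<lambda>\<omega>. h < S j \<omega>) (\<lambda>\<omega>. num_departures m x h (\<lambda>i. S i \<omega>) = d) = cc m x d"
    unfolding cond_prob_def using p1 p2 pos by simp
  have mpos: "real m > 0" using m by simp
  show ?thesis
    unfolding Let_def CP
  proof (intro conjI impI)
    assume "x \<le> m" then show "cc m x d = (real x - real d) / real x" by (simp add: cc_def)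
  next
    assume "m + 1 \<le> x" "d \<le> x - m"
    then show "cc m x d = ((real m - 1) / real m) ^ d" by (simp add: cc_def)
  next
    assume xm: "m + 1 \<le> x" and dm: "x - m \<le> d"
    show "cc m x d = ((real m - 1) / real m) ^ (x - m) * ((real x - real d) / real m)"
    proof (cases "d \<le> x - m")
      case True
      then have "d = x - m" using dm by simp
      then have "real x - real d = real m" using xm by simp
      then show ?thesis using True xm mpos \<open>d = x - m\<close> by (simp add: cc_def)
    next
      case False
      then show ?thesis using xm by (simp add: cc_def)
    qed
  qed
qed


end
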